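(* Let $G=(V,E,I,\{s,t\})$ be a grapht (possibly infinite). Suppose that $s$ is linked and that every system of edge-disjoint $st$-paths that links $s$ uses the edge $e$, where $e\in E\setminus\delta(s)$. Let $C$ be the $\trianglelefteq$-smallest Erdős–Menger $st$-cut that contains $e$. Then $C$ is tight, i.e. every linkage of $s$ is orthogonal to $C$.
   Context: Graphs may have parallel edges but no loops; all paths are finite. A grapht $(V,E,I,T)$ is a graph with a set $T$ of at least two terminal vertices; here $T=\{s,t\}$, so $T$-paths are exactly $st$-paths (paths from $s$ to $t$). $\delta(X)$ is the set of edges with exactly one end in $X$, $\delta(x)=\delta(\{x\})$; a cut is a set $\delta(X)$. For disjoint $A,B\subseteq V$, an $AB$-path has one endpoint in $A$, the other in $B$, and no inner vertex in $A\cup B$; an $AB$-cut is a cut $C$ such that $G-C$ has no $AB$-path. An edge set $C$ is orthogonal to a system $\mathcal{P}$ of edge-disjoint paths if $C$ consists of exactly one edge from each $P\in\mathcal{P}$ (and no other edges). An Erdős–Menger $st$-cut is an $st$-cut orthogonal to some system of edge-disjoint $st$-paths. For Erdős–Menger $st$-cuts $C,C'$, write $C\trianglelefteq C'$ if for every $st$-path $P$, with $<_P$ the linear order of $E(P)$ in the direction from $s$ to $t$, $\min_{<_P}(C\cap E(P))\le\min_{<_P}(C'\cap E(P))$. A system of edge-disjoint $st$-paths links $s$ if it covers $\delta(s)$; it is a linkage of $s$ if it links $s$ and every path in it contains an edge of $\delta(s)$ (i.e. it is minimal with this property); $s$ is linked if some system links it. *)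

theory Defs
  imports Main
begin

text \<open>A graph is given by a vertex set V, an edge set E and an incidence map
  ends assigning to each edge its set of ends (exactly two distinct ends:
  no loops; parallel edges allowed).\<close>

type_synonym ('v,'e) path = "'v list \<times> 'e list"

definition is_graph :: "'v set \<Rightarrow> 'e set \<Rightarrow> ('e \<Rightarrow> 'v set) \<Rightarrow> bool" where
  "is_graph V E ends \<longleftrightarrow> (\<forall>x\<in>E. ends x \<subseteq> V \<and> card (ends x) = 2)"

definition grapht :: "'v set \<Rightarrow> 'e set \<Rightarrow> ('e \<Rightarrow> 'v set) \<Rightarrow> 'v \<Rightarrow> 'v \<Rightarrow> bool" where
  "grapht V E ends s t \<longleftrightarrow> is_graph V E ends \<and> s \<in> V \<and> t \<in> V \<and> s \<noteq> t"

definition delta :: "'e set \<Rightarrow> ('e \<Rightarrow> 'v set) \<Rightarrow> 'v set \<Rightarrow> 'e set" where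
  "delta E ends X = {x \<in> E. card (ends x \<inter> X) = 1}"

definition is_path :: "'v set \<Rightarrow> 'e set \<Rightarrow> ('e \<Rightarrow> 'v set) \<Rightarrow> ('v,'e) path \<Rightarrow> bool" where
  "is_path V E ends P \<longleftrightarrow>
     length (fst P) = Suc (length (snd P)) \<and> distinct (fst P) \<and> distinct (snd P) \<and>
     set (fst P) \<subseteq> V \<and> set (snd P) \<subseteq> E \<and>
     (\<forall>i < length (snd P). ends (snd P ! i) = {fst P ! i, fst P ! Suc i})"

definition st_path :: "'v set \<Rightarrow> 'e set \<Rightarrow> ('e \<Rightarrow> 'v set) \<Rightarrow> 'v \<Rightarrow> 'v \<Rightarrow> ('v,'e) path \<Rightarrow> bool" where
  "st_path V E ends s t P \<longleftrightarrow> is_path V E ends P \<and> hd (fst P) = s \<and> last (fst P) = t"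

definition edges_of :: "('v,'e) path set \<Rightarrow> 'e set" where
  "edges_of \<P> = (\<Union>P\<in>\<P>. set (snd P))"

definition st_system :: "'v set \<Rightarrow> 'e set \<Rightarrow> ('e \<Rightarrow> 'v set) \<Rightarrow> 'v \<Rightarrow> 'v \<Rightarrow> ('v,'e) path set \<Rightarrow> bool" where
  "st_system V E ends s t \<P> \<longleftrightarrow> (\<forall>P\<in>\<P>. st_path V E ends s t P) \<and>
     (\<forall>P\<in>\<P>. \<forall>Q\<in>\<P>. P \<noteq> Q \<longrightarrow> set (snd P) \<inter> set (snd Q) = {})"

definition is_cut :: "'v set \<Rightarrow> 'e set \<Rightarrow> ('e \<Rightarrow> 'v set) \<Rightarrow> 'e set \<Rightarrow> bool" where
  "is_cut V E ends C \<longleftrightarrow> (\<exists>X\<subseteq>V. C = delta E ends X)"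

definition st_cut :: "'v set \<Rightarrow> 'e set \<Rightarrow> ('e \<Rightarrow> 'v set) \<Rightarrow> 'v \<Rightarrow> 'v \<Rightarrow> 'e set \<Rightarrow> bool" where
  "st_cut V E ends s t C \<longleftrightarrow> is_cut V E ends C \<and> \<not> (\<exists>P. st_path V (E - C) ends s t P)"

definition orthogonal :: "'e set \<Rightarrow> ('v,'e) path set \<Rightarrow> bool" where
  "orthogonal C \<P> \<longleftrightarrow> C \<subseteq> edges_of \<P> \<and> (\<forall>P\<in>\<P>. card (C \<inter> set (snd P)) = 1)"

definition EM_cut :: "'v set \<Rightarrow> 'e set \<Rightarrow> ('e \<Rightarrow> 'v set) \<Rightarrow> 'v \<Rightarrow> 'v \<Rightarrow> 'e set \<Rightarrow> bool" where
  "EM_cut V E ends s t C \<longleftrightarrow> st_cut V E ends s t C \<and>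
     (\<exists>\<P>. st_system V E ends s t \<P> \<and> orthogonal C \<P>)"

definition first_pos :: "'e set \<Rightarrow> ('v,'e) path \<Rightarrow> nat" where
  "first_pos C P = (LEAST i. i < length (snd P) \<and> snd P ! i \<in> C)"

definition cut_le :: "'v set \<Rightarrow> 'e set \<Rightarrow> ('e \<Rightarrow> 'v set) \<Rightarrow> 'v \<Rightarrow> 'v \<Rightarrow> 'e set \<Rightarrow> 'e set \<Rightarrow> bool" where
  "cut_le V E ends s t C C' \<longleftrightarrow>
     (\<forall>P. st_path V E ends s t P \<longrightarrow> first_pos C P \<le> first_pos C' P)"

definition links :: "'v set \<Rightarrow> 'e set \<Rightarrow> ('e \<Rightarrow> 'v set) \<Rightarrow> 'v \<Rightarrow> 'v \<Rightarrow> ('v,'e) path set \<Rightarrow> bool" where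
  "links V E ends s t \<P> \<longleftrightarrow> st_system V E ends s t \<P> \<and> delta E ends {s} \<subseteq> edges_of \<P>"

definition linkage :: "'v set \<Rightarrow> 'e set \<Rightarrow> ('e \<Rightarrow> 'v set) \<Rightarrow> 'v \<Rightarrow> 'v \<Rightarrow> ('v,'e) path set \<Rightarrow> bool" where
  "linkage V E ends s t \<P> \<longleftrightarrow> links V E ends s t \<P> \<and>
     (\<forall>P\<in>\<P>. set (snd P) \<inter> delta E ends {s} \<noteq> {})"

definition linked :: "'v set \<Rightarrow> 'e set \<Rightarrow> ('e \<Rightarrow> 'v set) \<Rightarrow> 'v \<Rightarrow> 'v \<Rightarrow> bool" where
  "linked V E ends s t \<longleftrightarrow> (\<exists>\<P>. links V E ends s t \<P>)"

end

theory Submission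
  imports Defs "HOL-Library.Transitive_Closure_Table"
begin


definition dset :: "('v,'e) path \<Rightarrow> ('v \<times> 'e \<times> 'v) set" where
  "dset P = {(fst P ! i, snd P ! i, fst P ! Suc i) | i. i < length (snd P)}"
definition dpre :: "('v,'e) path \<Rightarrow> nat \<Rightarrow> ('v \<times> 'e \<times> 'v) set" where
  "dpre P k = {(fst P ! i, snd P ! i, fst P ! Suc i) | i. i < k \<and> i < length (snd P)}"
definition dsuf :: "('v,'e) path \<Rightarrow> nat \<Rightarrow> ('v \<times> 'e \<times> 'v) set" where
  "dsuf P k = {(fst P ! i, snd P ! i, fst P ! Suc i) | i. k \<le> i \<and> i < length (snd P)}"
definition dirS :: "('v,'e) path set \<Rightarrow> 'e \<Rightarrow> 'v \<Rightarrow> 'v \<Rightarrow> bool" where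
  "dirS S g x y \<longleftrightarrow> (\<exists>P\<in>S. (x,g,y) \<in> dset P)"
definition relD :: "('v \<times> 'e \<times> 'v) set \<Rightarrow> 'v \<Rightarrow> 'v \<Rightarrow> bool" where
  "relD D x y \<longleftrightarrow> (\<exists>g. (x,g,y) \<in> D)"

lemma dset_iff: "(x,g,y) \<in> dset P \<longleftrightarrow> (\<exists>i<length (snd P). x = fst P ! i \<and> g = snd P ! i \<and> y = fst P ! Suc i)"
  unfolding dset_def by auto
lemma dpre_iff: "(x,g,y) \<in> dpre P k \<longleftrightarrow> (\<exists>i<length (snd P). i < k \<and> x = fst P ! i \<and> g = snd P ! i \<and> y = fst P ! Suc i)"
  unfolding dpre_def by auto
lemma dsuf_iff: "(x,g,y) \<in> dsuf P k \<longleftrightarrow> (\<exists>i<length (snd P). k \<le> i \<and> x = fst P ! i \<and> g = snd P ! i \<and> y = fst P ! Suc i)"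
  unfolding dsuf_def by auto
lemma dpre_sub: "dpre P k \<subseteq> dset P" unfolding dpre_def dset_def by auto
lemma dsuf_sub: "dsuf P k \<subseteq> dset P" unfolding dsuf_def dset_def by auto

lemma chain_rtranclp:
  assumes "\<And>i. a \<le> i \<Longrightarrow> i < b \<Longrightarrow> r (f i) (f (Suc i))" "a \<le> b"
  shows "r\<^sup>*\<^sup>* (f a) (f b)"
  using assms
proof (induction b)
  case 0 then show ?case by simp
next
  case (Suc b)
  show ?case
  proof (cases "a = Suc b")
    case True then show ?thesis by simp
  next
    case False
    then have "r\<^sup>*\<^sup>* (f a) (f b)" using Suc by auto
    moreover have "r (f b) (f (Suc b))" using Suc False by auto
    ultimately show ?thesis by (rule rtranclp.rtrancl_into_rtrancl)
  qed
qed

lemma rtrancl_path_mono_on: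
  assumes "rtrancl_path r x xs y" "\<And>a b. a \<in> set (x # xs) \<Longrightarrow> r a b \<Longrightarrow> r' a b"
  shows "rtrancl_path r' x xs y"
  using assms
proof (induction rule: rtrancl_path.induct)
  case (base x) show ?case by (rule rtrancl_path.base)
next
  case (step x y ys z)
  then show ?case by (auto intro: rtrancl_path.step)
qed

locale GG =
  fixes V :: "'v set" and E :: "'e set" and ends :: "'e \<Rightarrow> 'v set" and s t :: 'v
  assumes gr: "is_graph V E ends" and sV: "s \<in> V" and tV: "t \<in> V" and st: "s \<noteq> t"
begin

abbreviation pth where "pth P \<equiv> is_path V E ends P"

definition okD :: "('v \<times> 'e \<times> 'v) set \<Rightarrow> bool" where
  "okD D \<longleftrightarrow> (\<forall>x g y. (x,g,y) \<in> D \<longrightarrow> g \<in> E \<and> ends g = {x,y} \<and> x \<in> V \<and> y \<in> V) \<and>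
     (\<forall>x g y x' y'. (x,g,y) \<in> D \<longrightarrow> (x',g,y') \<in> D \<longrightarrow> x = x' \<and> y = y')"

lemma edge_ends: "g \<in> E \<Longrightarrow> \<exists>u w. ends g = {u,w} \<and> u \<noteq> w \<and> u \<in> V \<and> w \<in> V"
  using gr unfolding is_graph_def card_2_iff by (metis insert_subset)

lemma delta2: "ends g = {u,w} \<Longrightarrow> u \<noteq> w \<Longrightarrow> g \<in> E \<Longrightarrow>
   g \<in> delta E ends Z \<longleftrightarrow> ((u \<in> Z) \<noteq> (w \<in> Z))"
  unfolding delta_def by (cases "u \<in> Z"; cases "w \<in> Z") (auto simp: Int_insert_left)

lemma pth_len: "pth P \<Longrightarrow> length (fst P) = Suc (length (snd P))" unfolding is_path_def by auto
lemma pth_hd: "pth P \<Longrightarrow> hd (fst P) = fst P ! 0"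
  using pth_len by (metis hd_conv_nth list.size(3) nat.distinct(1))
lemma pth_last: "pth P \<Longrightarrow> last (fst P) = fst P ! length (snd P)"
  using pth_len by (metis diff_Suc_1 last_conv_nth list.size(3) nat.distinct(1))
lemma pth_V: "pth P \<Longrightarrow> i \<le> length (snd P) \<Longrightarrow> fst P ! i \<in> V"
  unfolding is_path_def by (metis le_imp_less_Suc nth_mem subsetD)
lemma pth_E: "pth P \<Longrightarrow> i < length (snd P) \<Longrightarrow> snd P ! i \<in> E"
  unfolding is_path_def by (metis nth_mem subsetD)
lemma pth_ends: "pth P \<Longrightarrow> i < length (snd P) \<Longrightarrow> ends (snd P ! i) = {fst P ! i, fst P ! Suc i}"
  unfolding is_path_def by auto
lemma pth_vinj: "pth P \<Longrightarrow> i \<le> length (snd P) \<Longrightarrow> j \<le> length (snd P) \<Longrightarrow> fst P ! i = fst P ! j \<Longrightarrow> i = j"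
  unfolding is_path_def by (metis le_imp_less_Suc nth_eq_iff_index_eq)
lemma pth_einj: "pth P \<Longrightarrow> i < length (snd P) \<Longrightarrow> j < length (snd P) \<Longrightarrow> snd P ! i = snd P ! j \<Longrightarrow> i = j"
  unfolding is_path_def by (metis nth_eq_iff_index_eq)

lemma dart: "pth P \<Longrightarrow> (x,g,y) \<in> dset P \<Longrightarrow> g \<in> E \<and> ends g = {x,y} \<and> x \<noteq> y \<and> x \<in> V \<and> y \<in> V \<and> g \<in> set (snd P)"
proof -
  assume p: "pth P" and d: "(x,g,y) \<in> dset P"
  then obtain i where i: "i < length (snd P)" "x = fst P ! i" "g = snd P ! i" "y = fst P ! Suc i"
    unfolding dset_iff by blast
  have "x \<noteq> y" using pth_vinj[OF p, of i "Suc i"] i by auto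
  then show ?thesis using i p by (auto simp: pth_E pth_ends pth_V)
qed

lemma edge_dart: "pth P \<Longrightarrow> g \<in> set (snd P) \<Longrightarrow> \<exists>x y. (x,g,y) \<in> dset P"
  unfolding dset_iff by (metis in_set_conv_nth)

lemma dart_fun: "pth P \<Longrightarrow> (x,g,y) \<in> dset P \<Longrightarrow> (x',g,y') \<in> dset P \<Longrightarrow> x = x' \<and> y = y'"
  unfolding dset_iff by (metis pth_einj)

lemma dart_not_hd: "pth P \<Longrightarrow> (x,g,y) \<in> dset P \<Longrightarrow> y \<noteq> hd (fst P)"
  unfolding dset_iff pth_hd by (metis Suc_leI less_imp_le_nat nat.distinct(1) pth_hd pth_vinj zero_le) 

lemma dart_from_hd: "pth P \<Longrightarrow> (hd (fst P),g,y) \<in> dset P \<Longrightarrow> g = snd P ! 0"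
  unfolding dset_iff by (metis less_imp_le_nat pth_hd pth_vinj zero_le)

lemma okD_dset: "pth P \<Longrightarrow> okD (dset P)"
  unfolding okD_def using dart dart_fun by blast
lemma okD_mono: "okD D \<Longrightarrow> D' \<subseteq> D \<Longrightarrow> okD D'"
  unfolding okD_def by blast

lemma reach_pre: "pth P \<Longrightarrow> k \<le> length (snd P) \<Longrightarrow> (relD (dpre P k))\<^sup>*\<^sup>* (fst P ! 0) (fst P ! k)"
  apply (rule chain_rtranclp[where f="\<lambda>i. fst P ! i"]) apply (simp add: relD_def dpre_iff)
  using order_less_le_trans by blast+
lemma reach_suf: "pth P \<Longrightarrow> k \<le> length (snd P) \<Longrightarrow> (relD (dsuf P k))\<^sup>*\<^sup>* (fst P ! k) (last (fst P))"
  unfolding pth_last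
  by (rule chain_rtranclp[where f="\<lambda>i. fst P ! i"]) (auto simp: relD_def dsuf_iff)

lemma dset_Cons: "dset (x # v # vs, g # es) = insert (x,g,v) (dset (v#vs, es))"
proof (rule set_eqI, clarify)
  fix a b c
  show "(a,b,c) \<in> dset (x # v # vs, g # es) \<longleftrightarrow> (a,b,c) \<in> insert (x,g,v) (dset (v#vs, es))"
  proof
    assume "(a,b,c) \<in> dset (x # v # vs, g # es)"
    then obtain i where i: "i < Suc (length es)" "a = (x#v#vs) ! i" "b = (g#es) ! i" "c = (x#v#vs) ! Suc i"
      unfolding dset_iff by auto
    show "(a,b,c) \<in> insert (x,g,v) (dset (v#vs, es))"
    proof (cases i)
      case 0 then show ?thesis using i by simp
    next
      case (Suc k)
      then have "(a,b,c) \<in> dset (v#vs, es)" unfolding dset_iff using i by auto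
      then show ?thesis by simp
    qed
  next
    assume "(a,b,c) \<in> insert (x,g,v) (dset (v#vs, es))"
    then show "(a,b,c) \<in> dset (x # v # vs, g # es)"
    proof
      assume "(a,b,c) = (x,g,v)"
      then show ?thesis unfolding dset_iff by (intro exI[of _ 0]) auto
    next
      assume "(a,b,c) \<in> dset (v#vs, es)"
      then obtain k where k: "k < length es" "a = (v#vs) ! k" "b = es ! k" "c = (v#vs) ! Suc k"
        unfolding dset_iff by auto
      then show ?thesis unfolding dset_iff by (intro exI[of _ "Suc k"]) auto
    qed
  qed
qed

lemma dset_Nil: "dset (vs, []) = {}" unfolding dset_def by auto

lemma mkp:
  assumes "okD D"
  shows "distinct (x#xs) \<Longrightarrow> rtrancl_path (relD D) x xs y \<Longrightarrow> x \<in> V \<Longrightarrow>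
    \<exists>es. pth (x#xs, es) \<and> last (x#xs) = y \<and> dset (x#xs, es) \<subseteq> D"
proof (induction xs arbitrary: x)
  case Nil
  then have "x = y" by (auto elim: rtrancl_path.cases)
  then show ?case using Nil unfolding is_path_def by (auto simp: dset_Nil)
next
  case (Cons z zs)
  from Cons.prems(2) have r: "relD D x z" and rp: "rtrancl_path (relD D) z zs y"
    by (auto elim: rtrancl_path.cases)
  then obtain g where g: "(x,g,z) \<in> D" unfolding relD_def by blast
  with assms have gE: "g \<in> E" "ends g = {x,z}" "z \<in> V" unfolding okD_def by blast+
  from Cons.IH[of z] Cons.prems rp gE obtain es where
    es: "pth (z#zs, es)" "last (z#zs) = y" "dset (z#zs, es) \<subseteq> D" by auto
  have gnot: "g \<notin> set es"
  proof
    assume "g \<in> set es"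
    then have "g \<in> set (snd (z#zs, es))" by simp
    then obtain a b where "(a,g,b) \<in> dset (z#zs, es)" using edge_dart[OF es(1)] by blast
    then have ab1: "(a,g,b) \<in> D" using es(3) by blast
    from \<open>(a,g,b) \<in> dset (z#zs, es)\<close> obtain i where "i < length es" "a = (z#zs) ! i"
      unfolding dset_iff by auto
    moreover have "length (z#zs) = Suc (length es)" using pth_len[OF es(1)] by simp
    ultimately have "a \<in> set (z#zs)" by (metis less_SucI nth_mem)
    note ab = ab1 this
    with g assms have "a = x" unfolding okD_def by blast
    with ab Cons.prems(1) show False by auto
  qed
  have "pth (x#z#zs, g#es)"
    using es(1) Cons.prems gE gnot unfolding is_path_def
    by (auto simp: less_Suc_eq_0_disj)
  moreover have "dset (x#z#zs, g#es) \<subseteq> D" using g es(3) by (simp add: dset_Cons)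
  ultimately show ?case using es(2) by auto
qed

lemma path_from:
  assumes "okD D" "x \<in> V" "(relD D)\<^sup>*\<^sup>* x y"
  shows "\<exists>P. pth P \<and> hd (fst P) = x \<and> last (fst P) = y \<and> dset P \<subseteq> D"
proof -
  obtain xs where "rtrancl_path (relD D) x xs y" using assms(3) rtranclp_eq_rtrancl_path by metis
  then obtain xs' where "rtrancl_path (relD D) x xs' y" "distinct (x # xs')"
    by (rule rtrancl_path_distinct)
  then obtain es where "pth (x#xs', es) \<and> last (x#xs') = y \<and> dset (x#xs', es) \<subseteq> D"
    using mkp[OF assms(1)] assms(2) by blast
  then show ?thesis by (intro exI[of _ "(x#xs', es)"]) auto
qed

lemma same_side:
  assumes p: "pth P" and "b \<le> length (snd P)" "a \<le> b"
    and "\<And>k. a \<le> k \<Longrightarrow> k < b \<Longrightarrow> snd P ! k \<notin> delta E ends Z"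
  shows "fst P ! a \<in> Z \<longleftrightarrow> fst P ! b \<in> Z"
  using assms(2-)
proof (induction b)
  case 0 then show ?case by simp
next
  case (Suc b)
  show ?case
  proof (cases "a = Suc b")
    case True then show ?thesis by simp
  next
    case False
    then have ih: "fst P ! a \<in> Z \<longleftrightarrow> fst P ! b \<in> Z" using Suc by auto
    have "b < length (snd P)" using Suc by auto
    then have "ends (snd P ! b) = {fst P ! b, fst P ! Suc b}" "snd P ! b \<in> E"
      "fst P ! b \<noteq> fst P ! Suc b"
      using pth_ends[OF p] pth_E[OF p] pth_vinj[OF p, of b "Suc b"] by auto
    moreover have "snd P ! b \<notin> delta E ends Z" using Suc False by auto
    ultimately show ?thesis using ih delta2 by blast
  qed
qed

lemma exit_edge:
  assumes p: "pth P" and "k \<le> length (snd P)" "fst P ! 0 \<in> Z" "fst P ! k \<notin> Z"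
  shows "\<exists>i<k. fst P ! i \<in> Z \<and> fst P ! Suc i \<notin> Z \<and> snd P ! i \<in> delta E ends Z"
  using assms(2-)
proof (induction k)
  case 0 then show ?case by simp
next
  case (Suc k)
  show ?case
  proof (cases "fst P ! k \<in> Z")
    case True
    have "k < length (snd P)" using Suc by auto
    then have "ends (snd P ! k) = {fst P ! k, fst P ! Suc k}" "snd P ! k \<in> E"
      "fst P ! k \<noteq> fst P ! Suc k"
      using pth_ends[OF p] pth_E[OF p] pth_vinj[OF p, of k "Suc k"] by auto
    then have "snd P ! k \<in> delta E ends Z" using True Suc.prems(3) delta2 by blast
    then show ?thesis using True Suc.prems(3) by (intro exI[of _ k]) auto
  next
    case False
    have "k \<le> length (snd P)" using Suc.prems by simp
    then obtain i where "i<k" "fst P ! i \<in> Z \<and> fst P ! Suc i \<notin> Z \<and> snd P ! i \<in> delta E ends Z"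
      using Suc.IH Suc.prems(2) False by blast
    then show ?thesis by (intro exI[of _ i]) auto
  qed
qed

lemma path_meets_cut:
  assumes p: "pth P" "hd (fst P) \<in> Z" "last (fst P) \<notin> Z"
  shows "\<exists>i<length (snd P). fst P ! i \<in> Z \<and> fst P ! Suc i \<notin> Z \<and> snd P ! i \<in> delta E ends Z"
  using exit_edge[OF p(1), of "length (snd P)" Z] p by (simp add: pth_hd pth_last)

lemma cross_once:
  assumes p: "pth P" "hd (fst P) \<in> Z" "last (fst P) \<notin> Z"
    and out: "\<And>x g y. (x,g,y) \<in> dset P \<Longrightarrow> g \<in> delta E ends Z \<Longrightarrow> x \<in> Z"
  shows "card (delta E ends Z \<inter> set (snd P)) = 1"
proof -
  have mono: "fst P ! m \<notin> Z" if "fst P ! k \<notin> Z" "k \<le> m" "m \<le> length (snd P)" for k m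
    using that
  proof (induction m)
    case 0 then show ?case by simp
  next
    case (Suc m)
    show ?case
    proof (cases "k = Suc m")
      case True then show ?thesis using Suc by simp
    next
      case False
      then have a: "fst P ! m \<notin> Z" using Suc by auto
      have "m < length (snd P)" using Suc by auto
      then have b: "ends (snd P ! m) = {fst P ! m, fst P ! Suc m}" "snd P ! m \<in> E"
        "fst P ! m \<noteq> fst P ! Suc m" "(fst P ! m, snd P ! m, fst P ! Suc m) \<in> dset P"
        using pth_ends[OF p(1)] pth_E[OF p(1)] pth_vinj[OF p(1), of m "Suc m"] by (auto simp: dset_iff)
      show ?thesis
      proof
        assume "fst P ! Suc m \<in> Z"
        then have "snd P ! m \<in> delta E ends Z" using delta2[OF b(1) b(3) b(2)] a by simp
        then show False using out[OF b(4)] a by blast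
      qed
    qed
  qed
  obtain i where i: "i<length (snd P)" "fst P ! i \<in> Z" "fst P ! Suc i \<notin> Z" "snd P ! i \<in> delta E ends Z"
    using path_meets_cut[OF p(1-3)] by blast
  have "delta E ends Z \<inter> set (snd P) = {snd P ! i}"
  proof (rule set_eqI, rule iffI)
    fix g assume "g \<in> delta E ends Z \<inter> set (snd P)"
    then obtain j where j: "j < length (snd P)" "g = snd P ! j" "g \<in> delta E ends Z"
      by (auto simp: in_set_conv_nth)
    then have jd: "(fst P ! j, g, fst P ! Suc j) \<in> dset P" by (auto simp: dset_iff)
    then have jz: "fst P ! j \<in> Z" using out j by blast
    have dd: "ends g = {fst P ! j, fst P ! Suc j}" "g \<in> E" "fst P ! j \<noteq> fst P ! Suc j"
      using dart[OF p(1) jd] by auto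
    have jz2: "fst P ! Suc j \<notin> Z" using jz j(3) delta2[OF dd(1) dd(3) dd(2)] by simp
    have "\<not> i < j" using mono[of "Suc i" j] i j jz by auto
    moreover have "\<not> j < i" using mono[of "Suc j" i] i j jz2 by auto
    ultimately show "g \<in> {snd P ! i}" using j by auto
  qed (use i in auto)
  then show ?thesis by simp
qed

lemma first_dart:
  assumes p: "pth P" "hd (fst P) = s" "last (fst P) \<noteq> s" "dset P \<subseteq> D"
    and h: "\<And>g y. (s,g,y) \<in> D \<Longrightarrow> g = h"
  shows "h \<in> set (snd P)"
proof -
  have "snd P \<noteq> []" using p(2,3) pth_hd[OF p(1)] pth_last[OF p(1)] by (metis list.size(3))
  then have "(fst P ! 0, snd P ! 0, fst P ! Suc 0) \<in> dset P" by (auto simp: dset_iff)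
  then have "snd P ! 0 = h" using h p by (auto simp: pth_hd)
  then show ?thesis using \<open>snd P \<noteq> []\<close> by auto
qed

end


context GG begin

definition edgesD :: "('v \<times> 'e \<times> 'v) set \<Rightarrow> 'e set" where
  "edgesD D = {g. \<exists>x y. (x,g,y) \<in> D}"

lemma edgesD_dset: assumes p: "pth P" shows "edgesD (dset P) = set (snd P)"
proof
  show "edgesD (dset P) \<subseteq> set (snd P)" unfolding edgesD_def using dart[OF p] by auto
  show "set (snd P) \<subseteq> edgesD (dset P)" unfolding edgesD_def using edge_dart[OF p] by auto
qed

lemma edges_sub: "pth P \<Longrightarrow> dset P \<subseteq> D \<Longrightarrow> set (snd P) \<subseteq> edgesD D"
  unfolding edgesD_def
  using edge_dart by blast

lemma edgesD_dpre: "edgesD (dpre P k) = {snd P ! j | j. j < k \<and> j < length (snd P)}"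
proof (rule set_eqI)
  fix g
  show "g \<in> edgesD (dpre P k) \<longleftrightarrow> g \<in> {snd P ! j | j. j < k \<and> j < length (snd P)}"
  proof
    assume "g \<in> edgesD (dpre P k)"
    then obtain x y where "(x,g,y) \<in> dpre P k" unfolding edgesD_def by blast
    then obtain i where "i < length (snd P)" "i < k" "g = snd P ! i" unfolding dpre_iff by blast
    then show "g \<in> {snd P ! j | j. j < k \<and> j < length (snd P)}" by blast
  next
    assume "g \<in> {snd P ! j | j. j < k \<and> j < length (snd P)}"
    then obtain i where "i < length (snd P)" "i < k" "g = snd P ! i" by blast
    then have "(fst P ! i, g, fst P ! Suc i) \<in> dpre P k" unfolding dpre_iff by blast
    then show "g \<in> edgesD (dpre P k)" unfolding edgesD_def by blast
  qed
qed
lemma edgesD_dsuf: "edgesD (dsuf P k) = {snd P ! j | j. k \<le> j \<and> j < length (snd P)}"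
proof (rule set_eqI)
  fix g
  show "g \<in> edgesD (dsuf P k) \<longleftrightarrow> g \<in> {snd P ! j | j. k \<le> j \<and> j < length (snd P)}"
  proof
    assume "g \<in> edgesD (dsuf P k)"
    then obtain x y where "(x,g,y) \<in> dsuf P k" unfolding edgesD_def by blast
    then obtain i where "i < length (snd P)" "k \<le> i" "g = snd P ! i" unfolding dsuf_iff by blast
    then show "g \<in> {snd P ! j | j. k \<le> j \<and> j < length (snd P)}" by blast
  next
    assume "g \<in> {snd P ! j | j. k \<le> j \<and> j < length (snd P)}"
    then obtain i where "i < length (snd P)" "k \<le> i" "g = snd P ! i" by blast
    then have "(fst P ! i, g, fst P ! Suc i) \<in> dsuf P k" unfolding dsuf_iff by blast
    then show "g \<in> edgesD (dsuf P k)" unfolding edgesD_def by blast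
  qed
qed

lemma edgesD_Un: "edgesD (A \<union> B) = edgesD A \<union> edgesD B" unfolding edgesD_def by blast
lemma edgesD_mono: "A \<subseteq> B \<Longrightarrow> edgesD A \<subseteq> edgesD B" unfolding edgesD_def by blast

lemma okD_union: "okD A \<Longrightarrow> okD B \<Longrightarrow> edgesD A \<inter> edgesD B = {} \<Longrightarrow> okD (A \<union> B)"
  unfolding okD_def edgesD_def by (smt (verit, ccfv_threshold) Un_iff disjoint_iff mem_Collect_eq)

lemma delta_s: "h \<in> delta E ends {s} \<Longrightarrow> s \<in> ends h"
proof -
  assume "h \<in> delta E ends {s}"
  then have "card (ends h \<inter> {s}) = 1" unfolding delta_def by simp
  then have "ends h \<inter> {s} \<noteq> {}" by (metis card.empty zero_neq_one)
  then show ?thesis by blast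
qed

lemma delta_first: "pth P \<Longrightarrow> hd (fst P) = s \<Longrightarrow> h \<in> delta E ends {s} \<Longrightarrow> h \<in> set (snd P) \<Longrightarrow> h = snd P ! 0"
proof -
  assume p: "pth P" "hd (fst P) = s" "h \<in> delta E ends {s}" "h \<in> set (snd P)"
  then obtain x y where d: "(x,h,y) \<in> dset P" using edge_dart by blast
  then have "ends h = {x,y}" "y \<noteq> s" using dart[OF p(1) d] dart_not_hd[OF p(1) d] p(2) by auto
  then have "x = s" using delta_s[OF p(3)] by auto
  then show ?thesis using dart_from_hd[OF p(1)] d p(2) by simp
qed

lemma ends_V: "g \<in> E \<Longrightarrow> ends g = {u,w} \<Longrightarrow> u \<in> V \<and> w \<in> V"
  using gr unfolding is_graph_def by auto


definition rstep :: "('v,'e) path set \<Rightarrow> 'e \<Rightarrow> 'v \<Rightarrow> 'v \<Rightarrow> bool" where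
  "rstep S e u w \<longleftrightarrow> (\<exists>g\<in>E. g \<noteq> e \<and> ends g = {u,w} \<and> \<not> dirS S g u w \<and> w \<noteq> s)"

definition valid :: "('v,'e) path set \<Rightarrow> ('v,'e) path \<Rightarrow> 'e \<Rightarrow> bool" where
  "valid PP R e \<longleftrightarrow> (\<forall>P\<in>PP. st_path V E ends s t P) \<and>
     (\<forall>P\<in>PP. \<forall>Q\<in>PP. P \<noteq> Q \<longrightarrow> set (snd P) \<inter> set (snd Q) = {}) \<and>
     pth R \<and> hd (fst R) = s \<and> last (fst R) \<noteq> s \<and>
     (\<forall>P\<in>PP. set (snd P) \<inter> set (snd R) = {}) \<and>
     e \<notin> edges_of PP \<and> e \<notin> set (snd R) \<and>
     delta E ends {s} \<subseteq> edges_of PP \<union> set (snd R)"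

lemma reach_full: "pth P \<Longrightarrow> (relD D)\<^sup>*\<^sup>* (hd (fst P)) (last (fst P))" if "dset P \<subseteq> D"
proof -
  assume p: "pth P"
  have "(relD (dpre P (length (snd P))))\<^sup>*\<^sup>* (fst P ! 0) (fst P ! length (snd P))"
    using reach_pre[OF p] by simp
  moreover have "relD (dpre P (length (snd P))) a b \<Longrightarrow> relD D a b" for a b
    using dpre_sub that unfolding relD_def by blast
  ultimately have "(relD D)\<^sup>*\<^sup>* (fst P ! 0) (fst P ! length (snd P))"
    by (metis mono_rtranclp)
  then show ?thesis using pth_hd[OF p] pth_last[OF p] by simp
qed

lemma rtranclp_mono_D: "(relD A)\<^sup>*\<^sup>* x y \<Longrightarrow> A \<subseteq> B \<Longrightarrow> (relD B)\<^sup>*\<^sup>* x y"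
proof -
  assume a: "(relD A)\<^sup>*\<^sup>* x y" "A \<subseteq> B"
  have "relD A a b \<Longrightarrow> relD B a b" for a b using a(2) unfolding relD_def by blast
  then show ?thesis using a(1) by (metis mono_rtranclp)
qed

lemma aug:
  assumes "valid PP R e" "rtrancl_path (rstep (insert R PP) e) (last (fst R)) ws t"
    "distinct (last (fst R) # ws)"
  shows "\<exists>S. links V E ends s t S \<and> e \<notin> edges_of S"
  using assms
proof (induction ws arbitrary: PP R)
  case Nil
  then have lt: "last (fst R) = t" by (auto elim: rtrancl_path.cases)
  have v: "\<forall>P\<in>PP. st_path V E ends s t P" "\<forall>P\<in>PP. \<forall>Q\<in>PP. P \<noteq> Q \<longrightarrow> set (snd P) \<inter> set (snd Q) = {}"
    "pth R" "hd (fst R) = s" "\<forall>P\<in>PP. set (snd P) \<inter> set (snd R) = {}"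
    "e \<notin> edges_of PP" "e \<notin> set (snd R)" "delta E ends {s} \<subseteq> edges_of PP \<union> set (snd R)"
    using Nil.prems(1) unfolding valid_def by auto
  have "st_system V E ends s t (insert R PP)"
    unfolding st_system_def st_path_def using v lt unfolding st_path_def by (auto simp: Int_commute)
  moreover have "delta E ends {s} \<subseteq> edges_of (insert R PP)" using v(8) unfolding edges_of_def by auto
  moreover have "e \<notin> edges_of (insert R PP)" using v(6,7) unfolding edges_of_def by auto
  ultimately show ?case unfolding links_def by blast
next
  case (Cons w1 ws)
  define S where "S = insert R PP"
  define w0 where "w0 = last (fst R)"
  have v: "\<forall>P\<in>PP. st_path V E ends s t P" "\<forall>P\<in>PP. \<forall>Q\<in>PP. P \<noteq> Q \<longrightarrow> set (snd P) \<inter> set (snd Q) = {}"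
    "pth R" "hd (fst R) = s" "last (fst R) \<noteq> s" "\<forall>P\<in>PP. set (snd P) \<inter> set (snd R) = {}"
    "e \<notin> edges_of PP" "e \<notin> set (snd R)" "delta E ends {s} \<subseteq> edges_of PP \<union> set (snd R)"
    using Cons.prems(1) unfolding valid_def by auto
  from Cons.prems(2) have st1: "rstep S e w0 w1" and rest: "rtrancl_path (rstep S e) w1 ws t"
    unfolding S_def w0_def by (auto elim: rtrancl_path.cases)
  have dist: "distinct (w1 # ws)" "w0 \<notin> set (w1 # ws)" using Cons.prems(3) unfolding w0_def by auto
  from st1 obtain g where g: "g \<in> E" "g \<noteq> e" "ends g = {w0,w1}" "\<not> dirS S g w0 w1" "w1 \<noteq> s"
    unfolding rstep_def by blast
  have w0V: "w0 \<in> V" unfolding w0_def using pth_last[OF v(3)] pth_V[OF v(3)] by simp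
  have w1V: "w1 \<in> V" using ends_V[OF g(1) g(3)] by simp
  have w0s: "w0 \<noteq> s" using v(5) unfolding w0_def .
  have Rfirst: "(s,h,y) \<in> dset R \<Longrightarrow> h = snd R ! 0" for h y
    using dart_from_hd[OF v(3)] v(4) by metis
  have PPpth: "P \<in> PP \<Longrightarrow> pth P \<and> hd (fst P) = s \<and> last (fst P) = t" for P
    using v(1) unfolding st_path_def by auto
  have cov_first: "h \<in> delta E ends {s} \<Longrightarrow> \<exists>P\<in>S. h = snd P ! 0 \<and> h \<in> set (snd P)" for h
  proof -
    assume h: "h \<in> delta E ends {s}"
    then obtain P where P: "P \<in> S" "h \<in> set (snd P)" using v(9) unfolding S_def edges_of_def by blast
    have "pth P \<and> hd (fst P) = s" using P(1) PPpth[of P] v(3,4) unfolding S_def by (cases "P = R") auto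
    then show ?thesis using delta_first h P by blast
  qed
  have reachR: "(relD (dset R))\<^sup>*\<^sup>* s w0" using reach_full[OF _ v(3)] v(4) unfolding w0_def by auto
  show ?case
  proof (cases "g \<in> edges_of PP \<or> g \<in> set (snd R)")
    case False
    define D where "D = insert (w0,g,w1) (dset R)"
    have gR: "g \<notin> edgesD (dset R)" using False edgesD_dset[OF v(3)] by auto
    have okD: "okD D" unfolding D_def
    proof -
      have "okD {(w0,g,w1)}" unfolding okD_def using g w0V w1V by auto
      moreover have "edgesD {(w0,g,w1)} \<inter> edgesD (dset R) = {}" using gR unfolding edgesD_def by auto
      ultimately have "okD ({(w0,g,w1)} \<union> dset R)" using okD_union okD_dset[OF v(3)] by blast
      then show "okD (insert (w0,g,w1) (dset R))" by simp
    qed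
    have "(relD D)\<^sup>*\<^sup>* s w0" using rtranclp_mono_D[OF reachR] unfolding D_def by blast
    moreover have "relD D w0 w1" unfolding relD_def D_def by blast
    ultimately have "(relD D)\<^sup>*\<^sup>* s w1" by (rule rtranclp.rtrancl_into_rtrancl)
    then obtain R' where R': "pth R'" "hd (fst R') = s" "last (fst R') = w1" "dset R' \<subseteq> D"
      using path_from[OF okD sV] by blast
    have R'e: "set (snd R') \<subseteq> insert g (set (snd R))"
      using edges_sub[OF R'(1) R'(4)] edgesD_dset[OF v(3)] unfolding D_def edgesD_def by auto
    have c6: "\<forall>P\<in>PP. set (snd P) \<inter> set (snd R') = {}"
      using R'e v(6) False unfolding edges_of_def by blast
    have c8: "e \<notin> set (snd R')" using R'e v(8) g(2) by blast
    have c5: "last (fst R') \<noteq> s" using R'(3) g(5) by simp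
    have c9: "delta E ends {s} \<subseteq> edges_of PP \<union> set (snd R')"
      proof
        fix h assume h: "h \<in> delta E ends {s}"
        then obtain P where P: "P \<in> S" "h = snd P ! 0" "h \<in> set (snd P)" using cov_first by blast
        show "h \<in> edges_of PP \<union> set (snd R')"
        proof (cases "P = R")
          case True
          have "snd R ! 0 \<in> set (snd R')"
          proof (rule first_dart[OF R'(1,2) _ R'(4)])
            show "last (fst R') \<noteq> s" using R'(3) g(5) by simp
            fix h' y assume "(s,h',y) \<in> D"
            then show "h' = snd R ! 0" unfolding D_def using w0s Rfirst by auto
          qed
          then show ?thesis using True P by simp
        next
          case False
          then show ?thesis using P unfolding S_def edges_of_def by auto
        qed
      qed
    have "valid PP R' e" unfolding valid_def by (insert v(1,2,7) R'(1,2) c5 c6 c8 c9, intro conjI; assumption)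
    moreover have "rtrancl_path (rstep (insert R' PP) e) (last (fst R')) ws t"
    proof -
      have "rstep (insert R' PP) e a b" if a: "a \<in> set (w1 # ws)" "rstep S e a b" for a b
      proof -
        have "a \<noteq> w0" using a dist by auto
        have "dirS (insert R' PP) g' a b \<Longrightarrow> dirS S g' a b" for g'
          using R'(4) \<open>a \<noteq> w0\<close> unfolding dirS_def S_def D_def by blast
        then show ?thesis using a(2) unfolding rstep_def by blast
      qed
      then show ?thesis using rtrancl_path_mono_on[OF rest] R'(3) by blast
    qed
    moreover have "distinct (last (fst R') # ws)" using dist R'(3) by simp
    ultimately show ?thesis using Cons.IH by blast
  next
    case True
    then obtain P where P: "P \<in> S" "g \<in> set (snd P)" unfolding S_def edges_of_def by blast
    have Pp: "pth P" "hd (fst P) = s" using P(1) PPpth[of P] v(3,4) unfolding S_def by (cases "P = R", auto)+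
    obtain x y where xy: "(x,g,y) \<in> dset P" using edge_dart[OF Pp(1) P(2)] by blast
    have "ends g = {x,y}" "x \<noteq> y" using dart[OF Pp(1) xy] by auto
    moreover have "(x,y) \<noteq> (w0,w1)" using g(4) P(1) xy unfolding dirS_def by auto
    ultimately have xw: "x = w1" "y = w0" using g(3) by (auto simp: doubleton_eq_iff)
    then obtain i where i: "i < length (snd P)" "fst P ! i = w1" "snd P ! i = g" "fst P ! Suc i = w0"
      using xy unfolding dset_iff by auto
    have i0: "i \<noteq> 0"
    proof
      assume "i = 0" then show False using i(2) g(5) Pp(2) pth_hd[OF Pp(1)] by simp
    qed
    have okP: "okD (dpre P i)" using okD_mono[OF okD_dset[OF Pp(1)] dpre_sub] .
    have "(relD (dpre P i))\<^sup>*\<^sup>* (fst P ! 0) (fst P ! i)" using reach_pre[OF Pp(1)] i(1) by simp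
    then have "(relD (dpre P i))\<^sup>*\<^sup>* s w1" using i(2) Pp(2) pth_hd[OF Pp(1)] by simp
    then obtain R' where R': "pth R'" "hd (fst R') = s" "last (fst R') = w1" "dset R' \<subseteq> dpre P i"
      using path_from[OF okP sV] by blast
    have R'e: "set (snd R') \<subseteq> {snd P ! j | j. j < i \<and> j < length (snd P)}"
      using edges_sub[OF R'(1) R'(4)] edgesD_dpre by auto
    have R'sub: "set (snd R') \<subseteq> set (snd P)" using R'e by auto
    have R'first: "snd P ! 0 \<in> set (snd R')"
    proof (rule first_dart[OF R'(1,2) _ R'(4)])
      show "last (fst R') \<noteq> s" using R'(3) g(5) by simp
      fix h' y assume "(s,h',y) \<in> dpre P i"
      then show "h' = snd P ! 0" using dpre_sub dart_from_hd[OF Pp(1)] Pp(2) by (metis subsetD)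
    qed
    have R'dir: "dset R' \<subseteq> dset P" using R'(4) dpre_sub by blast
    show ?thesis
    proof (cases "P = R")
      case True
      have c6: "\<forall>P\<in>PP. set (snd P) \<inter> set (snd R') = {}" using R'sub v(6) True by blast
      have c8: "e \<notin> set (snd R')" using R'sub v(8) True by blast
      have c5: "last (fst R') \<noteq> s" using R'(3) g(5) by simp
      have c9: "delta E ends {s} \<subseteq> edges_of PP \<union> set (snd R')"
        proof
          fix h assume h: "h \<in> delta E ends {s}"
          then obtain Q where Q: "Q \<in> S" "h = snd Q ! 0" "h \<in> set (snd Q)" using cov_first by blast
          show "h \<in> edges_of PP \<union> set (snd R')"
          proof (cases "Q = R")
            case True then show ?thesis using R'first Q \<open>P = R\<close> by simp
          next
            case False then show ?thesis using Q unfolding S_def edges_of_def by auto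
          qed
        qed
      have "valid PP R' e" unfolding valid_def by (insert v(1,2,7) R'(1,2) c5 c6 c8 c9, intro conjI; assumption)
      moreover have "rtrancl_path (rstep (insert R' PP) e) (last (fst R')) ws t"
      proof -
        have "rstep (insert R' PP) e a b" if a: "rstep S e a b" for a b
        proof -
          have "dirS (insert R' PP) g' a b \<Longrightarrow> dirS S g' a b" for g'
            using R'dir True unfolding dirS_def S_def by blast
          then show ?thesis using a unfolding rstep_def by blast
        qed
        then show ?thesis using rtrancl_path_mono_on[OF rest] R'(3) by blast
      qed
      moreover have "distinct (last (fst R') # ws)" using dist R'(3) by simp
      ultimately show ?thesis using Cons.IH by blast
    next
      case False
      then have PPP: "P \<in> PP" using P(1) unfolding S_def by simp
      have Pt: "last (fst P) = t" using PPpth[OF PPP] by simp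
      define D where "D = dset R \<union> dsuf P (Suc i)"
      have disjRP: "set (snd P) \<inter> set (snd R) = {}" using v(6) PPP by blast
      have okD: "okD D" unfolding D_def
      proof (rule okD_union[OF okD_dset[OF v(3)] okD_mono[OF okD_dset[OF Pp(1)] dsuf_sub]])
        have "edgesD (dsuf P (Suc i)) \<subseteq> set (snd P)"
          using edgesD_mono[OF dsuf_sub] edgesD_dset[OF Pp(1)] by blast
        then show "edgesD (dset R) \<inter> edgesD (dsuf P (Suc i)) = {}"
          using edgesD_dset[OF v(3)] disjRP by blast
      qed
      have "(relD D)\<^sup>*\<^sup>* s w0" unfolding D_def by (rule rtranclp_mono_D[OF reachR Un_upper1])
      moreover have "(relD (dsuf P (Suc i)))\<^sup>*\<^sup>* w0 t" using reach_suf[OF Pp(1), of "Suc i"] i Pt by simp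
      then have "(relD D)\<^sup>*\<^sup>* w0 t" unfolding D_def by (rule rtranclp_mono_D[OF _ Un_upper2])
      ultimately have "(relD D)\<^sup>*\<^sup>* s t" by (rule rtranclp_trans)
      then obtain Pn where Pn: "pth Pn" "hd (fst Pn) = s" "last (fst Pn) = t" "dset Pn \<subseteq> D"
        using path_from[OF okD sV] by blast
      have Pne: "set (snd Pn) \<subseteq> set (snd R) \<union> {snd P ! j | j. Suc i \<le> j \<and> j < length (snd P)}"
        using edges_sub[OF Pn(1) Pn(4)] edgesD_dset[OF v(3)] edgesD_dsuf[of P "Suc i"]
        unfolding D_def edgesD_Un by simp
      have "{snd P ! j | j. Suc i \<le> j \<and> j < length (snd P)} \<subseteq> set (snd P)"
      proof
        fix x assume "x \<in> {snd P ! j | j. Suc i \<le> j \<and> j < length (snd P)}"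
        then obtain j where "x = snd P ! j" "j < length (snd P)" by blast
        then show "x \<in> set (snd P)" by simp
      qed
      then have Pnsub: "set (snd Pn) \<subseteq> set (snd R) \<union> set (snd P)" using Pne by blast
      have R'Pn: "set (snd R') \<inter> set (snd Pn) = {}"
      proof -
        define A where "A = {snd P ! j | j. j < i \<and> j < length (snd P)}"
        define B where "B = {snd P ! j | j. Suc i \<le> j \<and> j < length (snd P)}"
        have AB: "A \<inter> B = {}"
        proof (rule ccontr)
          assume "A \<inter> B \<noteq> {}"
          then obtain x where "x \<in> A" "x \<in> B" by blast
          then obtain j1 j2 where "x = snd P ! j1" "j1 < i" "j1 < length (snd P)"
            "x = snd P ! j2" "Suc i \<le> j2" "j2 < length (snd P)" unfolding A_def B_def by blast
          then show False using pth_einj[OF Pp(1), of j1 j2] by simp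
        qed
        have "A \<subseteq> set (snd P)" unfolding A_def by auto
        then have "A \<inter> set (snd R) = {}" using disjRP by blast
        then show ?thesis using R'e Pne AB unfolding A_def[symmetric] B_def[symmetric] by blast
      qed
      define PP' where "PP' = insert Pn (PP - {P})"
      have c1: "\<forall>Q\<in>PP'. st_path V E ends s t Q"
      proof
        fix Q assume "Q \<in> PP'"
        then have "Q = Pn \<or> Q \<in> PP" unfolding PP'_def by blast
        then show "st_path V E ends s t Q" using v(1) Pn unfolding st_path_def by blast
      qed
      have aPn: "set (snd Pn) \<inter> set (snd Q'') = {}" if "Q'' \<in> PP" "Q'' \<noteq> P" for Q''
      proof -
        have "set (snd Q'') \<inter> set (snd R) = {}" using v(6) that by blast
        moreover have "set (snd Q'') \<inter> set (snd P) = {}" using v(2) PPP that by blast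
        ultimately show ?thesis using Pnsub by blast
      qed
      have c2: "\<forall>Q\<in>PP'. \<forall>Q'\<in>PP'. Q \<noteq> Q' \<longrightarrow> set (snd Q) \<inter> set (snd Q') = {}"
      proof (intro ballI impI)
        fix Q Q' assume Q: "Q \<in> PP'" "Q' \<in> PP'" "Q \<noteq> Q'"
        have q1: "Q = Pn \<or> (Q \<in> PP \<and> Q \<noteq> P)" using Q(1) unfolding PP'_def by blast
        have q2: "Q' = Pn \<or> (Q' \<in> PP \<and> Q' \<noteq> P)" using Q(2) unfolding PP'_def by blast
        show "set (snd Q) \<inter> set (snd Q') = {}"
        proof (cases "Q = Pn")
          case True
          then have "Q' \<in> PP \<and> Q' \<noteq> P" using q2 Q(3) by blast
          then show ?thesis using aPn True by blast
        next
          case False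
          then have qq: "Q \<in> PP \<and> Q \<noteq> P" using q1 by blast
          show ?thesis
          proof (cases "Q' = Pn")
            case True then show ?thesis using aPn[of Q] qq by blast
          next
            case False
            then have "Q' \<in> PP" using q2 by blast
            then show ?thesis using v(2) qq Q(3) by blast
          qed
        qed
      qed
      have c6: "\<forall>Q\<in>PP'. set (snd Q) \<inter> set (snd R') = {}"
      proof
        fix Q assume "Q \<in> PP'"
        then have "Q = Pn \<or> (Q \<in> PP \<and> Q \<noteq> P)" unfolding PP'_def by blast
        then show "set (snd Q) \<inter> set (snd R') = {}"
        proof
          assume "Q = Pn" then show ?thesis using R'Pn by blast
        next
          assume "Q \<in> PP \<and> Q \<noteq> P"
          then have "set (snd Q) \<inter> set (snd P) = {}" using v(2) PPP by blast
          then show ?thesis using R'sub by blast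
        qed
      qed
      have c7: "e \<notin> edges_of PP'"
      proof -
        have "e \<notin> set (snd P)" using v(7) PPP unfolding edges_of_def by blast
        then have "e \<notin> set (snd Pn)" using v(8) Pnsub by blast
        then show ?thesis using v(7) unfolding PP'_def edges_of_def by blast
      qed
      have c8: "e \<notin> set (snd R')" using R'sub v(7) PPP unfolding edges_of_def by blast
      have c5: "last (fst R') \<noteq> s" using R'(3) g(5) by simp
      have c9: "delta E ends {s} \<subseteq> edges_of PP' \<union> set (snd R')"
        proof
          fix h assume h: "h \<in> delta E ends {s}"
          then obtain Q where Q: "Q \<in> S" "h = snd Q ! 0" "h \<in> set (snd Q)" using cov_first by blast
          show "h \<in> edges_of PP' \<union> set (snd R')"
          proof (cases "Q = R")
            case True
            have "snd R ! 0 \<in> set (snd Pn)"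
            proof (rule first_dart[OF Pn(1,2) _ Pn(4)])
              show "last (fst Pn) \<noteq> s" using Pn(3) st by simp
              fix h' y assume hy: "(s,h',y) \<in> D"
              show "h' = snd R ! 0"
              proof (cases "(s,h',y) \<in> dset R")
                case True then show ?thesis using Rfirst by blast
              next
                case False
                then have "(s,h',y) \<in> dsuf P (Suc i)" using hy unfolding D_def by blast
                then obtain j where "j < length (snd P)" "Suc i \<le> j" "s = fst P ! j" unfolding dsuf_iff by blast
                moreover have "fst P ! 0 = s" using Pp(2) pth_hd[OF Pp(1)] by simp
                ultimately show ?thesis using pth_vinj[OF Pp(1), of 0 j] by simp
              qed
            qed
            then have "h \<in> set (snd Pn)" using True Q by simp
            then show ?thesis unfolding PP'_def edges_of_def by blast
          next
            case False
            show ?thesis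
            proof (cases "Q = P")
              case True then show ?thesis using R'first Q by simp
            next
              case False
              then have "Q \<in> PP'" using Q(1) \<open>Q \<noteq> R\<close> unfolding S_def PP'_def by blast
              then show ?thesis using Q(3) unfolding edges_of_def by blast
            qed
          qed
        qed
      have "valid PP' R' e" unfolding valid_def by (insert c1 c2 R'(1,2) c5 c6 c7 c8 c9, intro conjI; assumption)
      moreover have "rtrancl_path (rstep (insert R' PP') e) (last (fst R')) ws t"
      proof -
        have "rstep (insert R' PP') e a b" if a: "rstep S e a b" for a b
        proof -
          have "dirS (insert R' PP') g' a b \<Longrightarrow> dirS S g' a b" for g'
          proof -
            assume "dirS (insert R' PP') g' a b"
            then obtain Q where Q: "Q \<in> insert R' PP'" "(a,g',b) \<in> dset Q" unfolding dirS_def by blast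
            have "Q = R' \<or> Q = Pn \<or> Q \<in> PP" using Q(1) unfolding PP'_def by blast
            moreover have "dset Pn \<subseteq> dset R \<union> dset P" using Pn(4) dsuf_sub unfolding D_def by blast
            ultimately have "(a,g',b) \<in> dset R \<or> (a,g',b) \<in> dset P \<or> (\<exists>Q\<in>PP. (a,g',b) \<in> dset Q)"
              using Q(2) R'dir by blast
            then show "dirS S g' a b" unfolding dirS_def S_def using PPP by blast
          qed
          then show ?thesis using a unfolding rstep_def by blast
        qed
        then show ?thesis using rtrancl_path_mono_on[OF rest] R'(3) by blast
      qed
      moreover have "distinct (last (fst R') # ws)" using dist R'(3) by simp
      ultimately show ?thesis using Cons.IH by blast
    qed
  qed
qed

end


context GG begin

lemma delta_compl: "X \<subseteq> V \<Longrightarrow> delta E ends (V - X) = delta E ends X"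
proof (rule set_eqI)
  fix g assume X: "X \<subseteq> V"
  show "g \<in> delta E ends (V - X) \<longleftrightarrow> g \<in> delta E ends X"
  proof (cases "g \<in> E")
    case True
    then obtain u w where uw: "ends g = {u,w}" "u \<noteq> w" "u \<in> V" "w \<in> V" using edge_ends by blast
    show ?thesis using delta2[OF uw(1,2) True, of X] delta2[OF uw(1,2) True, of "V - X"] uw(3,4) by blast
  next
    case False then show ?thesis unfolding delta_def by simp
  qed
qed

lemma first_pos_le: "i < length (snd P) \<Longrightarrow> snd P ! i \<in> C \<Longrightarrow> first_pos C P \<le> i"
  unfolding first_pos_def by (rule Least_le) simp

lemma single_cross:
  assumes p: "pth P" and h: "fst P ! 0 \<in> X" and c: "card (delta E ends X \<inter> set (snd P)) = 1"
  shows "\<exists>j<length (snd P). snd P ! j \<in> delta E ends X \<and>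
     (\<forall>k<length (snd P). k \<noteq> j \<longrightarrow> snd P ! k \<notin> delta E ends X) \<and>
     (\<forall>k\<le>j. fst P ! k \<in> X) \<and> (\<forall>k. j < k \<and> k \<le> length (snd P) \<longrightarrow> fst P ! k \<notin> X)"
proof -
  obtain g where g: "delta E ends X \<inter> set (snd P) = {g}" using c card_1_singletonE by blast
  then have "g \<in> set (snd P)" by blast
  then obtain j where j: "j < length (snd P)" "snd P ! j = g" unfolding in_set_conv_nth by blast
  have jd: "snd P ! j \<in> delta E ends X" using g j by blast
  have other: "\<forall>k<length (snd P). k \<noteq> j \<longrightarrow> snd P ! k \<notin> delta E ends X"
  proof (intro allI impI)
    fix k assume k: "k < length (snd P)" "k \<noteq> j"
    show "snd P ! k \<notin> delta E ends X"
    proof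
      assume "snd P ! k \<in> delta E ends X"
      moreover have "snd P ! k \<in> set (snd P)" using k(1) by simp
      ultimately have "snd P ! k \<in> {g}" using g by blast
      then have "snd P ! k = g" by simp
      then show False using pth_einj[OF p k(1) j(1)] j(2) k(2) by simp
    qed
  qed
  have pre: "\<forall>k\<le>j. fst P ! k \<in> X"
  proof (intro allI impI)
    fix k assume k: "k \<le> j"
    have "fst P ! 0 \<in> X \<longleftrightarrow> fst P ! k \<in> X"
      by (rule same_side[OF p]) (use k j other in auto)
    then show "fst P ! k \<in> X" using h by simp
  qed
  have sj: "fst P ! Suc j \<notin> X"
  proof -
    have a: "ends g = {fst P ! j, fst P ! Suc j}" "fst P ! j \<noteq> fst P ! Suc j" "g \<in> E"
      using pth_ends[OF p j(1)] pth_vinj[OF p, of j "Suc j"] pth_E[OF p j(1)] j by auto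
    have "fst P ! j \<in> X" using pre by simp
    then show ?thesis using delta2[OF a] jd j(2) by simp
  qed
  have post: "\<forall>k. j < k \<and> k \<le> length (snd P) \<longrightarrow> fst P ! k \<notin> X"
  proof (intro allI impI)
    fix k assume k: "j < k \<and> k \<le> length (snd P)"
    have "fst P ! Suc j \<in> X \<longleftrightarrow> fst P ! k \<in> X"
      by (rule same_side[OF p]) (use k other in auto)
    then show "fst P ! k \<notin> X" using sj by simp
  qed
  show ?thesis by (insert j(1) jd other pre post, intro exI[of _ j] conjI; assumption)
qed

lemma first_cross:
  assumes p: "pth P" and h: "hd (fst P) \<in> X" and l: "last (fst P) \<notin> X"
  shows "first_pos (delta E ends X) P < length (snd P) \<and>
    snd P ! first_pos (delta E ends X) P \<in> delta E ends X \<and>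
    (\<forall>k<first_pos (delta E ends X) P. snd P ! k \<notin> delta E ends X) \<and>
    (\<forall>k\<le>first_pos (delta E ends X) P. fst P ! k \<in> X) \<and>
    fst P ! Suc (first_pos (delta E ends X) P) \<notin> X"
proof -
  define f where "f = first_pos (delta E ends X) P"
  obtain i where "i<length (snd P)" "snd P ! i \<in> delta E ends X"
    using path_meets_cut[OF p h l] by blast
  then have f1: "f < length (snd P) \<and> snd P ! f \<in> delta E ends X"
    unfolding f_def first_pos_def
    using LeastI[of "\<lambda>i. i < length (snd P) \<and> snd P ! i \<in> delta E ends X" i] by blast
  have f2: "\<forall>k<f. snd P ! k \<notin> delta E ends X"
  proof (intro allI impI)
    fix k assume "k < f"
    then have "\<not> (k < length (snd P) \<and> snd P ! k \<in> delta E ends X)"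
      unfolding f_def first_pos_def by (rule not_less_Least)
    then show "snd P ! k \<notin> delta E ends X" using \<open>k < f\<close> f1 by auto
  qed
  have f3: "\<forall>k\<le>f. fst P ! k \<in> X"
  proof (intro allI impI)
    fix k assume k: "k \<le> f"
    have "fst P ! 0 \<in> X \<longleftrightarrow> fst P ! k \<in> X"
      by (rule same_side[OF p]) (use k f1 f2 in auto)
    then show "fst P ! k \<in> X" using h pth_hd[OF p] by simp
  qed
  have f4: "fst P ! Suc f \<notin> X"
  proof -
    have a: "ends (snd P ! f) = {fst P ! f, fst P ! Suc f}" "fst P ! f \<noteq> fst P ! Suc f" "snd P ! f \<in> E"
      using pth_ends[OF p] pth_vinj[OF p, of f "Suc f"] pth_E[OF p] f1 by auto
    have "fst P ! f \<in> X" using f3 by simp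
    then show ?thesis using delta2[OF a] f1 by simp
  qed
  show ?thesis using f1 f2 f3 f4 unfolding f_def by simp
qed

end


context GG begin

lemma st_path_pth: "st_path V E ends s t P \<Longrightarrow> pth P \<and> fst P ! 0 = s \<and> fst P ! length (snd P) = t"
  unfolding st_path_def using pth_hd pth_last by metis

lemma main:
  fixes e :: 'e and C :: "'e set" and L :: "('v,'e) path set"
  assumes forced: "\<forall>PP. links V E ends s t PP \<longrightarrow> e \<in> edges_of PP"
    and eE: "e \<in> E - delta E ends {s}"
    and EM: "EM_cut V E ends s t C" and eC: "e \<in> C"
    and minC: "\<forall>C'. EM_cut V E ends s t C' \<and> e \<in> C' \<longrightarrow> cut_le V E ends s t C C'"
    and L: "linkage V E ends s t L"
  shows "orthogonal C L"
proof -
  obtain X0 where X0: "X0 \<subseteq> V" "C = delta E ends X0"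
    using EM unfolding EM_cut_def st_cut_def is_cut_def by blast
  have nopath: "\<not> (\<exists>P. st_path V (E - C) ends s t P)" using EM unfolding EM_cut_def st_cut_def by blast
  obtain QQ where QQ: "st_system V E ends s t QQ" "orthogonal C QQ"
    using EM unfolding EM_cut_def by blast
  have Qp: "pth Q \<and> fst Q ! 0 = s \<and> fst Q ! length (snd Q) = t" if "Q \<in> QQ" for Q
    using QQ(1) that st_path_pth unfolding st_system_def by blast
  have Qdisj: "Q1 \<in> QQ \<Longrightarrow> Q2 \<in> QQ \<Longrightarrow> Q1 \<noteq> Q2 \<Longrightarrow> set (snd Q1) \<inter> set (snd Q2) = {}" for Q1 Q2
    using QQ(1) unfolding st_system_def by blast
  have Qcard: "Q \<in> QQ \<Longrightarrow> card (C \<inter> set (snd Q)) = 1" for Q using QQ(2) unfolding orthogonal_def by blast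
  have CQ: "C \<subseteq> edges_of QQ" using QQ(2) unfolding orthogonal_def by blast
  have Lp: "pth P \<and> fst P ! 0 = s \<and> fst P ! length (snd P) = t" if "P \<in> L" for P
    using L that st_path_pth unfolding linkage_def links_def st_system_def by blast
  have Ldisj: "P1 \<in> L \<Longrightarrow> P2 \<in> L \<Longrightarrow> P1 \<noteq> P2 \<Longrightarrow> set (snd P1) \<inter> set (snd P2) = {}" for P1 P2
    using L unfolding linkage_def links_def st_system_def by blast
  have Lcov: "delta E ends {s} \<subseteq> edges_of L" using L unfolding linkage_def links_def by blast
  obtain X where X: "X \<subseteq> V" "s \<in> X" "t \<notin> X" "C = delta E ends X"
  proof -
    obtain Q0 where Q0: "Q0 \<in> QQ" "e \<in> set (snd Q0)" using CQ eC unfolding edges_of_def by blast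
    define Y where "Y = (if s \<in> X0 then X0 else V - X0)"
    have Y: "Y \<subseteq> V" "s \<in> Y" "C = delta E ends Y"
      unfolding Y_def using X0 sV delta_compl[OF X0(1)] by auto
    have "card (delta E ends Y \<inter> set (snd Q0)) = 1" using Qcard[OF Q0(1)] Y(3) by simp
    then obtain j where j: "j<length (snd Q0)" "\<forall>k. j < k \<and> k \<le> length (snd Q0) \<longrightarrow> fst Q0 ! k \<notin> Y"
      using single_cross[of Q0 Y] Qp[OF Q0(1)] Y(2) by blast
    then have "t \<notin> Y" using Qp[OF Q0(1)] by auto
    then show ?thesis using that Y by blast
  qed
  have QX: "first_pos C Q < length (snd Q) \<and> snd Q ! first_pos C Q \<in> C \<and>
     (\<forall>k<length (snd Q). k \<noteq> first_pos C Q \<longrightarrow> snd Q ! k \<notin> C) \<and>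
     (\<forall>k\<le>first_pos C Q. fst Q ! k \<in> X) \<and>
     (\<forall>k. first_pos C Q < k \<and> k \<le> length (snd Q) \<longrightarrow> fst Q ! k \<notin> X)" if Q: "Q \<in> QQ" for Q
  proof -
    obtain j where j: "j<length (snd Q)" "snd Q ! j \<in> C" "\<forall>k<length (snd Q). k \<noteq> j \<longrightarrow> snd Q ! k \<notin> C"
      "\<forall>k\<le>j. fst Q ! k \<in> X" "\<forall>k. j < k \<and> k \<le> length (snd Q) \<longrightarrow> fst Q ! k \<notin> X"
      using single_cross[of Q X] Qp[OF Q] Qcard[OF Q] X by auto
    have "first_pos C Q = j" unfolding first_pos_def
    proof (rule Least_equality)
      show "j < length (snd Q) \<and> snd Q ! j \<in> C" using j by simp
      fix y assume "y < length (snd Q) \<and> snd Q ! y \<in> C"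
      then show "j \<le> y" using j(3) by (cases "y = j") auto
    qed
    then show ?thesis using j by simp
  qed
  have PX: "first_pos C P < length (snd P) \<and> snd P ! first_pos C P \<in> C \<and>
    (\<forall>k<first_pos C P. snd P ! k \<notin> C) \<and> (\<forall>k\<le>first_pos C P. fst P ! k \<in> X) \<and>
    fst P ! Suc (first_pos C P) \<notin> X" if P: "pth P" "fst P ! 0 = s" "fst P ! length (snd P) = t" for P
    using first_cross[of P X] P X pth_hd[OF P(1)] pth_last[OF P(1)] by simp
  have QC: "\<exists>Q\<in>QQ. snd Q ! first_pos C Q = g" if g: "g \<in> C" for g
  proof -
    obtain Q where Q: "Q \<in> QQ" "g \<in> set (snd Q)" using CQ g unfolding edges_of_def by blast
    then obtain k where k: "k < length (snd Q)" "snd Q ! k = g" unfolding in_set_conv_nth by blast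
    then have "k = first_pos C Q" using QX[OF Q(1)] g by blast
    then show ?thesis using Q k by blast
  qed
  define pre :: "('v,'e) path \<Rightarrow> 'e set" where "pre P = {snd P ! k | k. k \<le> first_pos C P \<and> k < length (snd P)}" for P
  define tl' :: "('v,'e) path \<Rightarrow> 'e set" where "tl' Q = {snd Q ! k | k. first_pos C Q < k \<and> k < length (snd Q)}" for Q
  have preX: "\<exists>x\<in>X. x \<in> ends g" if a: "P \<in> L" "g \<in> pre P" for P g
  proof -
    obtain k where k: "g = snd P ! k" "k \<le> first_pos C P" "k < length (snd P)" using a(2) unfolding pre_def by blast
    then have "fst P ! k \<in> X" using PX Lp[OF a(1)] by blast
    moreover have "fst P ! k \<in> ends g" using pth_ends[OF _ k(3)] Lp[OF a(1)] k(1) by simp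
    ultimately show ?thesis by blast
  qed
  have tlX: "ends g \<inter> X = {} \<and> g \<notin> C \<and> g \<in> set (snd Q)" if a: "Q \<in> QQ" "g \<in> tl' Q" for Q g
  proof -
    obtain k where k: "g = snd Q ! k" "first_pos C Q < k" "k < length (snd Q)" using a(2) unfolding tl'_def by blast
    then have "fst Q ! k \<notin> X" "fst Q ! Suc k \<notin> X" "g \<notin> C" using QX[OF a(1)] by auto
    moreover have "ends g = {fst Q ! k, fst Q ! Suc k}" using pth_ends[OF _ k(3)] Qp[OF a(1)] k(1) by simp
    ultimately show ?thesis using k by auto
  qed
  have pre_tl: "pre P \<inter> tl' Q = {}" if "P \<in> L" "Q \<in> QQ" for P Q
    using preX[OF that(1)] tlX[OF that(2)] by blast
  have pre_sub: "pre P \<subseteq> set (snd P)" for P unfolding pre_def by auto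
  have tl_sub: "tl' Q \<subseteq> set (snd Q)" for Q unfolding tl'_def by auto
  have edpre: "edgesD (dpre P (Suc (first_pos C P))) = pre P" for P
    unfolding edgesD_dpre pre_def less_Suc_eq_le ..
  have edsuf: "edgesD (dsuf Q (Suc (first_pos C Q))) = tl' Q" for Q
    unfolding edgesD_dsuf tl'_def Suc_le_eq ..
  define CP where "CP P P' Q \<longleftrightarrow> pth P' \<and> hd (fst P') = s \<and> last (fst P') = t \<and> Q \<in> QQ \<and>
     snd Q ! first_pos C Q = snd P ! first_pos C P \<and> set (snd P') \<subseteq> pre P \<union> tl' Q \<and>
     (\<forall>x g y. (x,g,y) \<in> dset P' \<longrightarrow> g \<in> C \<longrightarrow> x \<in> X \<and> y \<notin> X \<and> g = snd P ! first_pos C P) \<and>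
     snd P ! 0 \<in> set (snd P')" for P P' Q
  have compose: "\<exists>P' Q. CP P P' Q" if P: "P \<in> L" for P
  proof -
    define f where "f = first_pos C P"
    have Pp: "pth P" "fst P ! 0 = s" "fst P ! length (snd P) = t" using Lp[OF P] by auto
    note pf = PX[OF Pp, folded f_def]
    obtain Q where Q: "Q \<in> QQ" "snd Q ! first_pos C Q = snd P ! f" using QC pf by blast
    define fq where "fq = first_pos C Q"
    note qf = QX[OF Q(1), folded fq_def]
    have Qpp: "pth Q" "fst Q ! 0 = s" "fst Q ! length (snd Q) = t" using Qp[OF Q(1)] by auto
    have meet: "fst P ! Suc f = fst Q ! Suc fq"
    proof -
      have "ends (snd P ! f) = {fst P ! f, fst P ! Suc f}" using pth_ends[OF Pp(1)] pf by simp
      moreover have "ends (snd Q ! fq) = {fst Q ! fq, fst Q ! Suc fq}" using pth_ends[OF Qpp(1)] qf by simp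
      moreover have "fst P ! f \<in> X" "fst P ! Suc f \<notin> X" "fst Q ! fq \<in> X" "fst Q ! Suc fq \<notin> X"
        using pf qf by auto
      ultimately show ?thesis using Q(2) unfolding fq_def[symmetric] by (metis insert_iff singletonD)
    qed
    define D where "D = dpre P (Suc f) \<union> dsuf Q (Suc fq)"
    have okD: "okD D" unfolding D_def
    proof (rule okD_union[OF okD_mono[OF okD_dset[OF Pp(1)] dpre_sub] okD_mono[OF okD_dset[OF Qpp(1)] dsuf_sub]])
      show "edgesD (dpre P (Suc f)) \<inter> edgesD (dsuf Q (Suc fq)) = {}"
        unfolding f_def fq_def edpre edsuf using pre_tl[OF P Q(1)] .
    qed
    have r1: "(relD D)\<^sup>*\<^sup>* s (fst P ! Suc f)"
      using reach_pre[OF Pp(1), of "Suc f"] pf Pp(2) rtranclp_mono_D[of "dpre P (Suc f)" _ _ D]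
      unfolding D_def by auto
    have r2: "(relD D)\<^sup>*\<^sup>* (fst Q ! Suc fq) t"
      using reach_suf[OF Qpp(1), of "Suc fq"] qf Qpp(3) pth_last[OF Qpp(1)] rtranclp_mono_D[of "dsuf Q (Suc fq)" _ _ D]
      unfolding D_def by auto
    have "(relD D)\<^sup>*\<^sup>* s t" using r1 r2 meet by simp
    then obtain P' where P': "pth P'" "hd (fst P') = s" "last (fst P') = t" "dset P' \<subseteq> D"
      using path_from[OF okD sV] by blast
    have e1: "set (snd P') \<subseteq> pre P \<union> tl' Q"
      using edges_sub[OF P'(1,4)] unfolding D_def edgesD_Un f_def fq_def edpre edsuf .
    have e2: "x \<in> X \<and> y \<notin> X \<and> g = snd P ! f" if xgy: "(x,g,y) \<in> dset P'" "g \<in> C" for x g y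
    proof -
      have "(x,g,y) \<in> D" using xgy P'(4) by blast
      then show ?thesis
      proof (unfold D_def, elim UnE)
        assume "(x,g,y) \<in> dpre P (Suc f)"
        then obtain k where k: "k < length (snd P)" "k < Suc f" "x = fst P ! k" "g = snd P ! k" "y = fst P ! Suc k"
          unfolding dpre_iff by blast
        have "k = f"
        proof (rule ccontr)
          assume "k \<noteq> f" then have "k < f" using k by simp
          then show False using pf k(4) xgy(2) by blast
        qed
        then show ?thesis using k pf by simp
      next
        assume "(x,g,y) \<in> dsuf Q (Suc fq)"
        then have "g \<in> tl' Q" using edsuf unfolding fq_def edgesD_def by blast
        then show ?thesis using tlX[OF Q(1)] xgy(2) by blast
      qed
    qed
    have e3: "snd P ! 0 \<in> set (snd P')"
    proof (rule first_dart[OF P'(1,2) _ P'(4)])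
      show "last (fst P') \<noteq> s" using P'(3) st by simp
      fix h y assume hy: "(s,h,y) \<in> D"
      then show "h = snd P ! 0"
      proof (unfold D_def, elim UnE)
        assume "(s,h,y) \<in> dpre P (Suc f)"
        then have "(s,h,y) \<in> dset P" using dpre_sub by blast
        then show ?thesis using dart_from_hd[OF Pp(1)] Pp(2) pth_hd[OF Pp(1)] by metis
      next
        assume "(s,h,y) \<in> dsuf Q (Suc fq)"
        then obtain k where "k < length (snd Q)" "Suc fq \<le> k" "s = fst Q ! k" unfolding dsuf_iff by blast
        then show ?thesis using qf X(2) by auto
      qed
    qed
    have "CP P P' Q" unfolding CP_def using P' Q e1 e2 e3 unfolding f_def by blast
    then show ?thesis by blast
  qed
  have ex: "\<forall>P\<in>L. \<exists>z. CP P (fst z) (snd z)" using compose by simp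
  obtain cz where cz: "\<forall>P\<in>L. CP P (fst (cz P)) (snd (cz P))" using bchoice[OF ex] by blast
  define cp where "cp P = fst (cz P)" for P
  define cq where "cq P = snd (cz P)" for P
  have CPP: "CP P (cp P) (cq P)" if "P \<in> L" for P using cz that unfolding cp_def cq_def by blast
  define L' where "L' = cp ` L"
  have CPd: "pth (cp P)" "hd (fst (cp P)) = s" "last (fst (cp P)) = t" "cq P \<in> QQ"
     "snd (cq P) ! first_pos C (cq P) = snd P ! first_pos C P"
     "set (snd (cp P)) \<subseteq> pre P \<union> tl' (cq P)"
     "\<forall>x g y. (x,g,y) \<in> dset (cp P) \<longrightarrow> g \<in> C \<longrightarrow> x \<in> X \<and> y \<notin> X \<and> g = snd P ! first_pos C P"
     "snd P ! 0 \<in> set (snd (cp P))" if "P \<in> L" for P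
    using CPP[OF that] unfolding CP_def by simp_all
  have cpst: "pth (cp P) \<and> hd (fst (cp P)) = s \<and> last (fst (cp P)) = t" if "P \<in> L" for P
    using CPd[OF that] by simp
  have cpE: "set (snd (cp P)) \<subseteq> pre P \<union> tl' (cq P)" "cq P \<in> QQ"
    "snd (cq P) ! first_pos C (cq P) = snd P ! first_pos C P" if "P \<in> L" for P
    using CPd[OF that] by simp_all
  have cpC: "x \<in> X \<and> y \<notin> X \<and> g = snd P ! first_pos C P" if "P \<in> L" "(x,g,y) \<in> dset (cp P)" "g \<in> C" for P x g y
    using CPd(7)[OF that(1)] that(2,3) by blast
  have cp0: "snd P ! 0 \<in> set (snd (cp P))" if "P \<in> L" for P
    using CPd[OF that] by simp
  have cpc: "snd P ! first_pos C P \<in> set (snd (cp P))" if P: "P \<in> L" for P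
  proof -
    have "\<not> st_path V (E - C) ends s t (cp P)" using nopath by blast
    moreover have "set (snd (cp P)) \<subseteq> E" using cpst[OF P] unfolding is_path_def by blast
    ultimately have "\<not> set (snd (cp P)) \<subseteq> E - C"
      using cpst[OF P] unfolding st_path_def is_path_def by blast
    then obtain g where g: "g \<in> set (snd (cp P))" "g \<in> C" using \<open>set (snd (cp P)) \<subseteq> E\<close> by blast
    then obtain x y where "(x,g,y) \<in> dset (cp P)" using edge_dart[of "cp P" g] cpst[OF P] by blast
    then show ?thesis using cpC[OF P _ g(2)] g(1) by blast
  qed
  have Pc: "snd P ! first_pos C P \<in> set (snd P) \<and> snd P ! first_pos C P \<in> C" if P: "P \<in> L" for P
  proof -
    have a: "pth P" "fst P ! 0 = s" "fst P ! length (snd P) = t" using Lp[OF P] by auto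
    show ?thesis using PX[OF a] by simp
  qed
  have cqinj: "cq P1 \<noteq> cq P2" if a: "P1 \<in> L" "P2 \<in> L" "P1 \<noteq> P2" for P1 P2
  proof
    assume "cq P1 = cq P2"
    then have eq: "snd P1 ! first_pos C P1 = snd P2 ! first_pos C P2" using cpE(3)[OF a(1)] cpE(3)[OF a(2)] by metis
    have m1: "snd P1 ! first_pos C P1 \<in> set (snd P1)" using Pc[OF a(1)] by (rule conjunct1)
    have m2: "snd P1 ! first_pos C P1 \<in> set (snd P2)" unfolding eq using Pc[OF a(2)] by (rule conjunct1)
    have "snd P1 ! first_pos C P1 \<in> set (snd P1) \<inter> set (snd P2)" using m1 m2 by (rule IntI)
    then show False unfolding Ldisj[OF a] by (rule emptyE)
  qed
  have L'sys: "st_system V E ends s t L'"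
    unfolding st_system_def
  proof (intro conjI ballI impI)
    fix P' assume "P' \<in> L'"
    then obtain P where "P \<in> L" "P' = cp P" unfolding L'_def by blast
    then show "st_path V E ends s t P'" using cpst unfolding st_path_def by blast
  next
    fix P1' P2' assume a: "P1' \<in> L'" "P2' \<in> L'" "P1' \<noteq> P2'"
    then obtain P1 P2 where P: "P1 \<in> L" "P1' = cp P1" "P2 \<in> L" "P2' = cp P2" unfolding L'_def by blast
    then have ne: "P1 \<noteq> P2" using a(3) by blast
    have "pre P1 \<inter> pre P2 = {}" using Ldisj[OF P(1,3) ne] pre_sub by blast
    moreover have "pre P1 \<inter> tl' (cq P2) = {}" "pre P2 \<inter> tl' (cq P1) = {}"
      using pre_tl cpE P by blast+
    moreover have "tl' (cq P1) \<inter> tl' (cq P2) = {}"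
      using Qdisj[OF cpE(2)[OF P(1)] cpE(2)[OF P(3)] cqinj[OF P(1,3) ne]] tl_sub by blast
    ultimately show "set (snd P1') \<inter> set (snd P2') = {}" using cpE(1)[OF P(1)] cpE(1)[OF P(3)] P by blast
  qed
  have L'pth: "pth P' \<and> fst P' ! 0 = s \<and> fst P' ! length (snd P') = t" if "P' \<in> L'" for P'
    using L'sys that st_path_pth unfolding st_system_def by blast
  have L'disj: "P1 \<in> L' \<Longrightarrow> P2 \<in> L' \<Longrightarrow> P1 \<noteq> P2 \<Longrightarrow> set (snd P1) \<inter> set (snd P2) = {}" for P1 P2
    using L'sys unfolding st_system_def by blast
  have L'cov: "delta E ends {s} \<subseteq> edges_of L'"
  proof
    fix h assume h: "h \<in> delta E ends {s}"
    then obtain P where P: "P \<in> L" "h \<in> set (snd P)" using Lcov unfolding edges_of_def by blast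
    then have "h = snd P ! 0" using delta_first[OF _ _ h] Lp[OF P(1)] pth_hd by metis
    then show "h \<in> edges_of L'" using cp0[OF P(1)] P(1) unfolding L'_def edges_of_def by blast
  qed
  have L'links: "links V E ends s t L'" unfolding links_def using L'sys L'cov by blast
  have L'C: "x \<in> X \<and> y \<notin> X \<and> (\<exists>P\<in>L. g = snd P ! first_pos C P)" if a: "P' \<in> L'" "(x,g,y) \<in> dset P'" "g \<in> C" for P' x g y
  proof -
    obtain P where P: "P \<in> L" "P' = cp P" using a(1) unfolding L'_def by blast
    have "x \<in> X \<and> y \<notin> X \<and> g = snd P ! first_pos C P" using cpC[OF P(1)] a(2,3) P(2) by simp
    then show ?thesis using P(1) by blast
  qed
  have L'tail: "tl' Q \<inter> edges_of L' = {}" if Q: "Q \<in> QQ" "snd Q ! first_pos C Q \<notin> edges_of L'" for Q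
  proof -
    have "tl' Q \<inter> set (snd (cp P)) = {}" if P: "P \<in> L" for P
    proof -
      have "cq P \<noteq> Q"
      proof
        assume "cq P = Q"
        then have "snd Q ! first_pos C Q \<in> set (snd (cp P))" using cpc[OF P] cpE(3)[OF P] by simp
        then show False using Q(2) P unfolding L'_def edges_of_def by blast
      qed
      then have "tl' Q \<inter> tl' (cq P) = {}" using Qdisj[OF Q(1) cpE(2)[OF P]] tl_sub by blast
      then show ?thesis using cpE(1)[OF P] pre_tl[OF P Q(1)] by blast
    qed
    then show ?thesis unfolding L'_def edges_of_def by blast
  qed
  have eL': "e \<in> edges_of L'" using forced L'links by blast
  then obtain Pe where Pe: "Pe \<in> L'" "e \<in> set (snd Pe)" unfolding edges_of_def by blast
  have Pep: "pth Pe" "fst Pe ! 0 = s" "fst Pe ! length (snd Pe) = t" using L'pth[OF Pe(1)] by auto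
  obtain ie where ie: "ie < length (snd Pe)" "snd Pe ! ie = e" using Pe(2) unfolding in_set_conv_nth by blast
  define xe where "xe = fst Pe ! ie"
  define ye where "ye = fst Pe ! Suc ie"
  have dE: "(xe, e, ye) \<in> dset Pe" unfolding dset_iff xe_def ye_def using ie by auto
  have xy: "xe \<in> X" "ye \<notin> X" using L'C[OF Pe(1) dE eC] by auto
  have endse: "ends e = {xe,ye}" "xe \<noteq> ye" "e \<in> E" using dart[OF Pep(1) dE] by auto
  have xes: "xe \<noteq> s"
  proof
    assume "xe = s"
    moreover have "ye \<noteq> s" using xy X(2) by auto
    ultimately have "e \<in> delta E ends {s}" using delta2[OF endse, of "{s}"] by simp
    then show False using eE by simp
  qed
  have ie0: "ie \<noteq> 0" using xes Pep(2) unfolding xe_def by (cases ie) auto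
  have okR: "okD (dpre Pe ie)" using okD_mono[OF okD_dset[OF Pep(1)] dpre_sub] .
  have "(relD (dpre Pe ie))\<^sup>*\<^sup>* (fst Pe ! 0) (fst Pe ! ie)" using reach_pre[OF Pep(1)] ie(1) by simp
  then have "(relD (dpre Pe ie))\<^sup>*\<^sup>* s xe" using Pep(2) unfolding xe_def by simp
  then obtain R0 where R0: "pth R0" "hd (fst R0) = s" "last (fst R0) = xe" "dset R0 \<subseteq> dpre Pe ie"
    using path_from[OF okR sV] by blast
  have R0e: "set (snd R0) \<subseteq> {snd Pe ! j | j. j < ie \<and> j < length (snd Pe)}"
    using edges_sub[OF R0(1) R0(4)] unfolding edgesD_dpre .
  have R0sub: "set (snd R0) \<subseteq> set (snd Pe)" using R0e by auto
  have eR0: "e \<notin> set (snd R0)"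
  proof
    assume "e \<in> set (snd R0)"
    then obtain j where j: "e = snd Pe ! j" "j < ie" "j < length (snd Pe)" using R0e by blast
    then show False using pth_einj[OF Pep(1) j(3) ie(1)] ie(2) by simp
  qed
  have R0first: "snd Pe ! 0 \<in> set (snd R0)"
  proof (rule first_dart[OF R0(1,2) _ R0(4)])
    show "last (fst R0) \<noteq> s" using R0(3) xes by simp
    fix h y assume "(s,h,y) \<in> dpre Pe ie"
    then have "(s,h,y) \<in> dset Pe" using dpre_sub by blast
    then show "h = snd Pe ! 0" using dart_from_hd[OF Pep(1)] Pep(2) pth_hd[OF Pep(1)] by metis
  qed
  define PP0 where "PP0 = L' - {Pe}"
  have v: "valid PP0 R0 e"
  proof -
    have c1: "\<forall>P\<in>PP0. st_path V E ends s t P" using L'sys unfolding PP0_def st_system_def by blast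
    have c2: "\<forall>P\<in>PP0. \<forall>Q\<in>PP0. P \<noteq> Q \<longrightarrow> set (snd P) \<inter> set (snd Q) = {}"
      using L'disj unfolding PP0_def by blast
    have c5: "last (fst R0) \<noteq> s" using R0(3) xes by simp
    have c6: "\<forall>P\<in>PP0. set (snd P) \<inter> set (snd R0) = {}"
    proof
      fix P assume "P \<in> PP0"
      then have "set (snd P) \<inter> set (snd Pe) = {}" using L'disj Pe(1) unfolding PP0_def by blast
      then show "set (snd P) \<inter> set (snd R0) = {}" using R0sub by blast
    qed
    have c7: "e \<notin> edges_of PP0"
    proof
      assume "e \<in> edges_of PP0"
      then obtain P where "P \<in> PP0" "e \<in> set (snd P)" unfolding edges_of_def by blast
      then show False using L'disj[of P Pe] Pe unfolding PP0_def by blast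
    qed
    have c9: "delta E ends {s} \<subseteq> edges_of PP0 \<union> set (snd R0)"
    proof
      fix h assume h: "h \<in> delta E ends {s}"
      then obtain P where P: "P \<in> L'" "h \<in> set (snd P)" using L'cov unfolding edges_of_def by blast
      show "h \<in> edges_of PP0 \<union> set (snd R0)"
      proof (cases "P = Pe")
        case True
        then have "h = snd Pe ! 0" using delta_first[OF Pep(1) _ h] P(2) Pep(2) pth_hd[OF Pep(1)] by simp
        then show ?thesis using R0first by simp
      next
        case False
        then show ?thesis using P unfolding PP0_def edges_of_def by blast
      qed
    qed
    show ?thesis unfolding valid_def by (insert c1 c2 R0(1,2) c5 c6 c7 eR0 c9, intro conjI; assumption)
  qed
  define S0 where "S0 = insert R0 PP0"
  have dirS0: "dirS L' g u w" if a: "dirS S0 g u w" for g u w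
  proof -
    obtain P where P: "P \<in> S0" "(u,g,w) \<in> dset P" using a unfolding dirS_def by blast
    show ?thesis
    proof (cases "P = R0")
      case True
      then have "(u,g,w) \<in> dset Pe" using P(2) R0(4) dpre_sub by blast
      then show ?thesis using Pe(1) unfolding dirS_def by blast
    next
      case False
      then have "P \<in> L'" using P(1) unfolding S0_def PP0_def by blast
      then show ?thesis using P(2) unfolding dirS_def by blast
    qed
  qed
  have edS0: "g \<in> edges_of L'" if a: "dirS S0 g u w" for g u w
  proof -
    obtain P where P: "P \<in> L'" "(u,g,w) \<in> dset P" using dirS0[OF a] unfolding dirS_def by blast
    then have "g \<in> set (snd P)" using dart[of P u g w] L'pth[OF P(1)] by blast
    then show ?thesis using P(1) unfolding edges_of_def by blast
  qed
  define T where "T = {v. (rstep S0 e)\<^sup>*\<^sup>* v t}"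
  define Z where "Z = X - T"
  have xeT: "xe \<notin> T"
  proof
    assume "xe \<in> T"
    then have "(rstep S0 e)\<^sup>*\<^sup>* xe t" unfolding T_def by simp
    then obtain ws where "rtrancl_path (rstep S0 e) xe ws t" using rtranclp_eq_rtrancl_path by metis
    then obtain ws' where ws': "rtrancl_path (rstep S0 e) xe ws' t" "distinct (xe # ws')"
      by (rule rtrancl_path_distinct)
    have "\<exists>S. links V E ends s t S \<and> e \<notin> edges_of S"
      using aug[OF v] ws' R0(3) unfolding S0_def by simp
    then show False using forced by blast
  qed
  have sZ: "s \<in> Z"
  proof -
    have "s \<notin> T"
    proof
      assume "s \<in> T"
      then have "(rstep S0 e)\<^sup>*\<^sup>* s t" unfolding T_def by simp
      then obtain w where "rstep S0 e s w" using st by (metis converse_rtranclpE)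
      then obtain g where g: "g \<in> E" "ends g = {s,w}" "\<not> dirS S0 g s w" "w \<noteq> s"
        unfolding rstep_def by blast
      have "g \<in> delta E ends {s}" using delta2[OF g(2) g(4)[symmetric] g(1), of "{s}"] g(4) by simp
      then have "g \<in> edges_of PP0 \<union> set (snd R0)" using v unfolding valid_def by blast
      then obtain P where P: "P \<in> S0" "g \<in> set (snd P)" unfolding S0_def edges_of_def by blast
      have Ph: "pth P" "hd (fst P) = s"
      proof -
        have "P = R0 \<or> P \<in> L'" using P(1) unfolding S0_def PP0_def by blast
        then show "pth P" "hd (fst P) = s" using R0 L'pth pth_hd by (metis)+
      qed
      obtain x y where xy: "(x,g,y) \<in> dset P" using edge_dart[OF Ph(1) P(2)] by blast
      have "ends g = {x,y}" "y \<noteq> s" using dart[OF Ph(1) xy] dart_not_hd[OF Ph(1) xy] Ph(2) by auto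
      then have "x = s" "y = w" using g(2) g(4) by (auto simp: doubleton_eq_iff)
      then have "dirS S0 g s w" using xy P(1) unfolding dirS_def by blast
      then show False using g(3) by blast
    qed
    then show ?thesis unfolding Z_def using X(2) by blast
  qed
  have tailreach: "(rstep S0 e)\<^sup>*\<^sup>* (fst Q ! Suc (first_pos C Q)) t"
    if Q: "Q \<in> QQ" "snd Q ! first_pos C Q \<notin> edges_of L'" for Q
  proof -
    define fq where "fq = first_pos C Q"
    note qf = QX[OF Q(1), folded fq_def]
    have Qpp: "pth Q" "fst Q ! 0 = s" "fst Q ! length (snd Q) = t" using Qp[OF Q(1)] by auto
    have tle: "tl' Q \<inter> edges_of L' = {}" using L'tail[OF Q] .
    have "(rstep S0 e)\<^sup>*\<^sup>* (fst Q ! Suc fq) (fst Q ! length (snd Q))"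
    proof (rule chain_rtranclp[where f="\<lambda>k. fst Q ! k"])
      show "Suc fq \<le> length (snd Q)" using qf by simp
      fix k assume k: "Suc fq \<le> k" "k < length (snd Q)"
      have gt: "snd Q ! k \<in> tl' Q" unfolding tl'_def fq_def[symmetric] using k by auto
      have "snd Q ! k \<notin> C" using tlX[OF Q(1) gt] by blast
      then have ne: "snd Q ! k \<noteq> e" using eC by blast
      have nd: "\<not> dirS S0 (snd Q ! k) (fst Q ! k) (fst Q ! Suc k)"
      proof
        assume "dirS S0 (snd Q ! k) (fst Q ! k) (fst Q ! Suc k)"
        then have "snd Q ! k \<in> edges_of L'" by (rule edS0)
        then show False using tle gt by blast
      qed
      have ns: "fst Q ! Suc k \<noteq> s" using qf k X(2) by auto
      show "rstep S0 e (fst Q ! k) (fst Q ! Suc k)"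
        unfolding rstep_def using pth_E[OF Qpp(1) k(2)] pth_ends[OF Qpp(1) k(2)] ne nd ns by blast
    qed
    then show ?thesis using Qpp(3) unfolding fq_def by simp
  qed
  have ZX: "Z \<subseteq> X" unfolding Z_def by blast
  have xeZ: "xe \<in> Z" using xy(1) xeT unfolding Z_def by blast
  have good: "\<exists>u w. dirS L' g u w \<and> u \<in> Z \<and> w \<notin> Z" if g: "g \<in> delta E ends Z" for g
  proof -
    have gE: "g \<in> E" using g unfolding delta_def by blast
    obtain a b where ab: "ends g = {a,b}" "a \<noteq> b" using edge_ends[OF gE] by blast
    have "(a \<in> Z) \<noteq> (b \<in> Z)" using delta2[OF ab gE] g by simp
    then obtain u w where uw: "ends g = {u,w}" "u \<noteq> w" "u \<in> Z" "w \<notin> Z"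
      using ab by (metis insert_commute)
    have "dirS L' g u w"
    proof (rule ccontr)
      assume nd: "\<not> dirS L' g u w"
      have "g \<noteq> e"
      proof
        assume "g = e"
        then have "{u,w} = {xe,ye}" using uw(1) endse(1) by simp
        moreover have "u \<noteq> ye" using uw(3) ZX xy(2) by blast
        ultimately have "u = xe" "w = ye" by (auto simp: doubleton_eq_iff)
        then show False using nd dE Pe(1) \<open>g = e\<close> unfolding dirS_def by blast
      qed
      have nd0: "\<not> dirS S0 g u w" using nd dirS0 by blast
      have ws: "w \<noteq> s" using uw(4) sZ by blast
      have rs: "rstep S0 e u w" unfolding rstep_def using gE \<open>g \<noteq> e\<close> uw(1) nd0 ws by blast
      have wT: "w \<notin> T"
      proof
        assume "w \<in> T"
        then have "(rstep S0 e)\<^sup>*\<^sup>* u t" using rs unfolding T_def by (simp add: converse_rtranclp_into_rtranclp)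
        then show False using uw(3) unfolding Z_def T_def by blast
      qed
      have wX: "w \<notin> X" using wT uw(4) unfolding Z_def by blast
      have uX: "u \<in> X" using uw(3) ZX by blast
      have gC: "g \<in> C" using delta2[OF uw(1,2) gE, of X] uX wX X(4) by simp
      have gL: "g \<notin> edges_of L'"
      proof
        assume "g \<in> edges_of L'"
        then obtain P' where P': "P' \<in> L'" "g \<in> set (snd P')" unfolding edges_of_def by blast
        obtain x y where xy': "(x,g,y) \<in> dset P'" using edge_dart[of P' g] L'pth[OF P'(1)] P'(2) by blast
        have "x \<in> X" "y \<notin> X" using L'C[OF P'(1) xy' gC] by auto
        moreover have "ends g = {x,y}" using dart[of P' x g y] L'pth[OF P'(1)] xy' by blast
        ultimately have "x = u" "y = w" using uw(1) uX wX by (auto simp: doubleton_eq_iff)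
        then show False using nd P'(1) xy' unfolding dirS_def by blast
      qed
      obtain Q where Q: "Q \<in> QQ" "snd Q ! first_pos C Q = g" using QC[OF gC] by blast
      have qf: "first_pos C Q < length (snd Q)" "fst Q ! first_pos C Q \<in> X" "fst Q ! Suc (first_pos C Q) \<notin> X"
        using QX[OF Q(1)] by auto
      have "ends g = {fst Q ! first_pos C Q, fst Q ! Suc (first_pos C Q)}"
        using pth_ends[OF _ qf(1)] Qp[OF Q(1)] Q(2) by metis
      then have "w = fst Q ! Suc (first_pos C Q)" using uw(1) wX qf(2) by (auto simp: doubleton_eq_iff)
      then have "w \<in> T" using tailreach[OF Q(1)] Q(2) gL unfolding T_def by simp
      then show False using wT by blast
    qed
    then show ?thesis using uw by blast
  qed
  define D where "D = delta E ends Z"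
  have ZV: "Z \<subseteq> V" using ZX X(1) by blast
  have tZ: "t \<notin> Z" using ZX X(3) by blast
  have DL': "D \<subseteq> edges_of L'"
  proof
    fix g assume "g \<in> D"
    then obtain u w where "dirS L' g u w" using good unfolding D_def by blast
    then obtain P where P: "P \<in> L'" "(u,g,w) \<in> dset P" unfolding dirS_def by blast
    then have "g \<in> set (snd P)" using dart[of P u g w] L'pth[OF P(1)] by blast
    then show "g \<in> edges_of L'" using P(1) unfolding edges_of_def by blast
  qed
  have Dcard: "card (D \<inter> set (snd P')) = 1" if P': "P' \<in> L'" for P'
  proof -
    have pp: "pth P'" "hd (fst P') = s" "last (fst P') = t" using L'pth[OF P'] pth_hd pth_last by auto
    show ?thesis unfolding D_def
    proof (rule cross_once[OF pp(1)])
      show "hd (fst P') \<in> Z" using pp(2) sZ by simp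
      show "last (fst P') \<notin> Z" using pp(3) tZ by simp
      fix x g y assume xgy: "(x,g,y) \<in> dset P'" "g \<in> delta E ends Z"
      obtain u w where uw: "dirS L' g u w" "u \<in> Z" "w \<notin> Z" using good[OF xgy(2)] by blast
      then obtain P'' where P'': "P'' \<in> L'" "(u,g,w) \<in> dset P''" unfolding dirS_def by blast
      have g1: "g \<in> set (snd P')" using dart[OF pp(1) xgy(1)] by blast
      have g2: "g \<in> set (snd P'')" using dart[of P'' u g w] L'pth[OF P''(1)] P''(2) by blast
      have "P'' = P'"
      proof (rule ccontr)
        assume "P'' \<noteq> P'"
        then have "set (snd P'') \<inter> set (snd P') = {}" using L'disj P' P''(1) by blast
        then show False using g1 g2 by blast
      qed
      then have "x = u" using dart_fun[OF pp(1) xgy(1)] P''(2) by blast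
      then show "x \<in> Z" using uw(2) by simp
    qed
  qed
  have DEM: "EM_cut V E ends s t D"
    unfolding EM_cut_def st_cut_def
  proof (intro conjI)
    show "is_cut V E ends D" unfolding is_cut_def D_def using ZV by blast
    show "\<not> (\<exists>P. st_path V (E - D) ends s t P)"
    proof
      assume "\<exists>P. st_path V (E - D) ends s t P"
      then obtain P where P: "st_path V (E - D) ends s t P" by blast
      then have pp: "pth P" "hd (fst P) = s" "last (fst P) = t" "set (snd P) \<subseteq> E - D"
        unfolding st_path_def is_path_def by auto
      obtain i where "i < length (snd P)" "snd P ! i \<in> delta E ends Z"
        using path_meets_cut[OF pp(1)] pp(2,3) sZ tZ by auto
      then show False using pp(4) unfolding D_def by (meson DiffD2 nth_mem subsetD)
    qed
    show "\<exists>PP. st_system V E ends s t PP \<and> orthogonal D PP"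
      using L'sys DL' Dcard unfolding orthogonal_def by blast
  qed
  have eD: "e \<in> D" unfolding D_def using delta2[OF endse] xeZ xy(2) ZX by blast
  have cle: "cut_le V E ends s t C D" using minC DEM eD by blast
  have CL': "C \<subseteq> edges_of L'"
  proof
    fix c assume c: "c \<in> C"
    show "c \<in> edges_of L'"
    proof (rule ccontr)
      assume cn: "c \<notin> edges_of L'"
      obtain Q where Q: "Q \<in> QQ" "snd Q ! first_pos C Q = c" using QC[OF c] by blast
      define fq where "fq = first_pos C Q"
      have qf: "fq < length (snd Q)" "fst Q ! fq \<in> X" "fst Q ! Suc fq \<notin> X"
        using QX[OF Q(1)] unfolding fq_def by auto
      have Qpp: "pth Q" "fst Q ! 0 = s" "fst Q ! length (snd Q) = t" using Qp[OF Q(1)] by auto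
      have nz: "fst Q ! fq \<notin> Z"
      proof
        assume "fst Q ! fq \<in> Z"
        moreover have "fst Q ! Suc fq \<notin> Z" using qf(3) ZX by blast
        moreover have "ends c = {fst Q ! fq, fst Q ! Suc fq}" "c \<in> E"
          "fst Q ! fq \<noteq> fst Q ! Suc fq"
          using pth_ends[OF Qpp(1) qf(1)] pth_E[OF Qpp(1) qf(1)] qf Q(2) unfolding fq_def by auto
        ultimately have "c \<in> D" unfolding D_def using delta2 by blast
        then show False using DL' cn by blast
      qed
      obtain i where i: "i < fq" "snd Q ! i \<in> delta E ends Z"
        using exit_edge[OF Qpp(1), of fq Z] qf(1) Qpp(2) sZ nz by auto
      have "first_pos D Q \<le> i" using first_pos_le[of i Q D] i qf(1) unfolding D_def by simp
      moreover have "first_pos C Q \<le> first_pos D Q"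
        using cle Qp[OF Q(1)] QQ(1) Q(1) unfolding cut_le_def st_system_def by blast
      ultimately show False using i(1) unfolding fq_def by simp
    qed
  qed
  have CinL: "\<exists>P\<in>L. g = snd P ! first_pos C P" if g: "g \<in> C" for g
  proof -
    obtain P' where P': "P' \<in> L'" "g \<in> set (snd P')" using CL' g unfolding edges_of_def by blast
    obtain x y where xy': "(x,g,y) \<in> dset P'" using edge_dart[of P' g] L'pth[OF P'(1)] P'(2) by blast
    show ?thesis using L'C[OF P'(1) xy' g] by blast
  qed
  show ?thesis unfolding orthogonal_def
  proof (intro conjI ballI)
    show "C \<subseteq> edges_of L"
    proof
      fix g assume "g \<in> C"
      then obtain P where P: "P \<in> L" "g = snd P ! first_pos C P" using CinL by blast
      then have "g \<in> set (snd P)" using Pc[OF P(1)] by simp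
      then show "g \<in> edges_of L" using P(1) unfolding edges_of_def by blast
    qed
  next
    fix P assume P: "P \<in> L"
    have "C \<inter> set (snd P) = {snd P ! first_pos C P}"
    proof
      show "{snd P ! first_pos C P} \<subseteq> C \<inter> set (snd P)" using Pc[OF P] by simp
      show "C \<inter> set (snd P) \<subseteq> {snd P ! first_pos C P}"
      proof
        fix g assume g: "g \<in> C \<inter> set (snd P)"
        then obtain P2 where P2: "P2 \<in> L" "g = snd P2 ! first_pos C P2" using CinL by blast
        have "g \<in> set (snd P2)" using Pc[OF P2(1)] P2(2) by simp
        then have "P2 = P" using Ldisj[OF P2(1) P] g by blast
        then show "g \<in> {snd P ! first_pos C P}" using P2(2) by simp
      qed
    qed
    then show "card (C \<inter> set (snd P)) = 1" by simp
  qed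
qed

end

theorem lemma3p8:
  fixes V :: "'v set" and E :: "'e set" and ends :: "'e \<Rightarrow> 'v set"
    and s t :: 'v and e :: 'e and C :: "'e set"
  assumes "grapht V E ends s t"
    and "linked V E ends s t"
    and "\<forall>\<P>. links V E ends s t \<P> \<longrightarrow> e \<in> edges_of \<P>"
    and "e \<in> E - delta E ends {s}"
    and "EM_cut V E ends s t C" and "e \<in> C"
    and "\<forall>C'. EM_cut V E ends s t C' \<and> e \<in> C' \<longrightarrow> cut_le V E ends s t C C'"
  shows "\<forall>\<P>. linkage V E ends s t \<P> \<longrightarrow> orthogonal C \<P>"
proof -
  interpret GG V E ends s t
    using assms(1) unfolding grapht_def by unfold_locales auto
  show ?thesis using main[OF assms(3) assms(4) assms(5) assms(6) assms(7)] by blast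
qed

end
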